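(* If $R$ is an affine ternary relation and $\sigma$ is a permutation of $\mathcal M$ preserving $R$, then $\sigma\in AGL(\mathcal M)$.
   Context: $\mathcal M$ denotes the $\mathbb Q$-vector space $\mathbb Q^{<\omega}$ of all sequences of rationals with only finitely many nonzero terms, with zero vector $\vec 0$. A relation is definable if it is first-order definable without parameters in $\langle\mathcal M;+\rangle$. A permutation $\sigma$ preserves a ternary relation $R$ if $R(a,b,c)\iff R(\sigma a,\sigma b,\sigma c)$ for all $a,b,c$. $AGL(\mathcal M)$ is the group of maps $x\mapsto A x+v$ with $A$ an invertible $\mathbb Q$-linear map of $\mathcal M$ and $v\in\mathcal M$. A ternary relation $R(x,y,z)$ has table $T$, where $T\subset\mathbb Q^2$ is finite, if for all linearly independent $x,y$ and all $z$: $R(x,y,z)\iff z=px+qy$ for some $(p,q)\in T$. A definable ternary relation $R$ is affine if it has a nonempty table $T$ such that every $(p,q)\in T$ satisfies $p\ne0$, $q\ne0$, $p+q=1$, and moreover for all $x,y,z\in\mathcal M$: if $x\ne y$ and $R(x,y,z)$ then $z\in\{x+t(y-x):t\in\mathbb Q\}$, and if $R(x,x,z)$ then $z=x$. *)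

theory Defs
  imports Complex_Main
begin

definition Mset :: "(nat \<Rightarrow> rat) set" where
  "Mset = {f. finite {i. f i \<noteq> 0}}"

definition vzero :: "nat \<Rightarrow> rat" where "vzero = (\<lambda>_. 0)"
definition vadd :: "(nat \<Rightarrow> rat) \<Rightarrow> (nat \<Rightarrow> rat) \<Rightarrow> (nat \<Rightarrow> rat)" where
  "vadd x y = (\<lambda>i. x i + y i)"
definition vsub :: "(nat \<Rightarrow> rat) \<Rightarrow> (nat \<Rightarrow> rat) \<Rightarrow> (nat \<Rightarrow> rat)" where
  "vsub x y = (\<lambda>i. x i - y i)"
definition smul :: "rat \<Rightarrow> (nat \<Rightarrow> rat) \<Rightarrow> (nat \<Rightarrow> rat)" where
  "smul p x = (\<lambda>i. p * x i)"

definition lin_indep2 :: "(nat \<Rightarrow> rat) \<Rightarrow> (nat \<Rightarrow> rat) \<Rightarrow> bool" where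
  "lin_indep2 x y \<longleftrightarrow> (\<forall>p q. vadd (smul p x) (smul q y) = vzero \<longrightarrow> p = 0 \<and> q = 0)"

datatype tm = V nat | Add tm tm
datatype fm = Eq tm tm | Neg fm | Conj fm fm | Ex nat fm

primrec evt :: "(nat \<Rightarrow> nat \<Rightarrow> rat) \<Rightarrow> tm \<Rightarrow> nat \<Rightarrow> rat" where
  "evt e (V n) = e n"
| "evt e (Add s t) = vadd (evt e s) (evt e t)"

primrec sat :: "(nat \<Rightarrow> nat \<Rightarrow> rat) \<Rightarrow> fm \<Rightarrow> bool" where
  "sat e (Eq s t) = (evt e s = evt e t)"
| "sat e (Neg \<phi>) = (\<not> sat e \<phi>)"
| "sat e (Conj \<phi> \<psi>) = (sat e \<phi> \<and> sat e \<psi>)"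
| "sat e (Ex n \<phi>) = (\<exists>a\<in>Mset. sat (e(n := a)) \<phi>)"

definition definable3 :: "((nat \<Rightarrow> rat) \<Rightarrow> (nat \<Rightarrow> rat) \<Rightarrow> (nat \<Rightarrow> rat) \<Rightarrow> bool) \<Rightarrow> bool" where
  "definable3 R \<longleftrightarrow> (\<exists>\<phi>. \<forall>e. (\<forall>n. e n \<in> Mset) \<longrightarrow> (R (e 0) (e 1) (e 2) \<longleftrightarrow> sat e \<phi>))"

definition has_table :: "((nat \<Rightarrow> rat) \<Rightarrow> (nat \<Rightarrow> rat) \<Rightarrow> (nat \<Rightarrow> rat) \<Rightarrow> bool) \<Rightarrow> (rat \<times> rat) set \<Rightarrow> bool" where
  "has_table R T \<longleftrightarrow> finite T \<and>
     (\<forall>x\<in>Mset. \<forall>y\<in>Mset. lin_indep2 x y \<longrightarrow>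
        (\<forall>z\<in>Mset. R x y z \<longleftrightarrow> (\<exists>(p,q)\<in>T. z = vadd (smul p x) (smul q y))))"

definition affine_rel :: "((nat \<Rightarrow> rat) \<Rightarrow> (nat \<Rightarrow> rat) \<Rightarrow> (nat \<Rightarrow> rat) \<Rightarrow> bool) \<Rightarrow> bool" where
  "affine_rel R \<longleftrightarrow> definable3 R \<and>
     (\<exists>T. T \<noteq> {} \<and> has_table R T \<and> (\<forall>(p,q)\<in>T. p \<noteq> 0 \<and> q \<noteq> 0 \<and> p + q = 1)) \<and>
     (\<forall>x\<in>Mset. \<forall>y\<in>Mset. \<forall>z\<in>Mset. x \<noteq> y \<and> R x y z \<longrightarrow>
        (\<exists>t::rat. z = vadd x (smul t (vsub y x)))) \<and>
     (\<forall>x\<in>Mset. \<forall>z\<in>Mset. R x x z \<longrightarrow> z = x)"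

definition preserves3 :: "((nat \<Rightarrow> rat) \<Rightarrow> (nat \<Rightarrow> rat)) \<Rightarrow> ((nat \<Rightarrow> rat) \<Rightarrow> (nat \<Rightarrow> rat) \<Rightarrow> (nat \<Rightarrow> rat) \<Rightarrow> bool) \<Rightarrow> bool" where
  "preserves3 \<sigma> R \<longleftrightarrow> (\<forall>a\<in>Mset. \<forall>b\<in>Mset. \<forall>c\<in>Mset. R a b c \<longleftrightarrow> R (\<sigma> a) (\<sigma> b) (\<sigma> c))"

definition linear_on_M :: "((nat \<Rightarrow> rat) \<Rightarrow> (nat \<Rightarrow> rat)) \<Rightarrow> bool" where
  "linear_on_M A \<longleftrightarrow> (\<forall>x\<in>Mset. \<forall>y\<in>Mset. A (vadd x y) = vadd (A x) (A y)) \<and>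
                       (\<forall>p. \<forall>x\<in>Mset. A (smul p x) = smul p (A x))"

definition in_AGL :: "((nat \<Rightarrow> rat) \<Rightarrow> (nat \<Rightarrow> rat)) \<Rightarrow> bool" where
  "in_AGL \<sigma> \<longleftrightarrow> (\<exists>A v. linear_on_M A \<and> bij_betw A Mset Mset \<and> v \<in> Mset \<and>
                      (\<forall>x\<in>Mset. \<sigma> x = vadd (A x) v))"

end

theory Submission
  imports Defs "HOL-Library.Function_Algebras"
begin

lemma vadd_eq [simp]: "vadd x y = x + y" by (simp add: vadd_def fun_eq_iff)
lemma vsub_eq [simp]: "vsub x y = x - y" by (simp add: vsub_def fun_eq_iff)
lemma vzero_eq [simp]: "vzero = 0" by (simp add: vzero_def fun_eq_iff)
lemma smul_apply [simp]: "smul p x i = p * x i" by (simp add: smul_def)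

definition lin :: "(nat \<Rightarrow> rat) \<Rightarrow> (nat \<Rightarrow> rat) \<Rightarrow> (nat \<Rightarrow> rat) set" where
  "lin a b = {c. \<exists>t. c = a + smul t (b - a)}"

lemma Mset_iff: "x \<in> Mset \<longleftrightarrow> finite {i. x i \<noteq> 0}" by (simp add: Mset_def)

lemma Mset_add [intro]: "x \<in> Mset \<Longrightarrow> y \<in> Mset \<Longrightarrow> x + y \<in> Mset"
  unfolding Mset_iff by (rule finite_subset[of _ "{i. x i \<noteq> 0} \<union> {i. y i \<noteq> 0}"]) auto
lemma Mset_diff [intro]: "x \<in> Mset \<Longrightarrow> y \<in> Mset \<Longrightarrow> x - y \<in> Mset"
  unfolding Mset_iff by (rule finite_subset[of _ "{i. x i \<noteq> 0} \<union> {i. y i \<noteq> 0}"]) auto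
lemma Mset_uminus [intro]: "x \<in> Mset \<Longrightarrow> - x \<in> Mset"
  unfolding Mset_iff by simp
lemma Mset_smul [intro]: "x \<in> Mset \<Longrightarrow> smul p x \<in> Mset"
  unfolding Mset_iff by (rule finite_subset[of _ "{i. x i \<noteq> 0}"]) auto
lemma Mset_zero [intro, simp]: "0 \<in> Mset"
  unfolding Mset_iff by simp

definition dl :: "nat \<Rightarrow> nat \<Rightarrow> rat" where "dl k = (\<lambda>i. if i = k then 1 else 0)"
lemma dl_Mset [intro, simp]: "dl k \<in> Mset"
  unfolding Mset_iff dl_def by (rule finite_subset[of _ "{k}"]) auto
lemma dl_same [simp]: "dl k k = 1" by (simp add: dl_def)
lemma dl_other [simp]: "i \<noteq> k \<Longrightarrow> dl k i = 0" by (simp add: dl_def)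

lemma lin_Mset: "a \<in> Mset \<Longrightarrow> b \<in> Mset \<Longrightarrow> c \<in> lin a b \<Longrightarrow> c \<in> Mset"
  unfolding lin_def by auto

lemma lin_left [simp]: "a \<in> lin a b" unfolding lin_def by (auto intro!: exI[of _ 0] simp: fun_eq_iff)
lemma lin_right [simp]: "b \<in> lin a b" unfolding lin_def by (auto intro!: exI[of _ 1] simp: fun_eq_iff)

lemma lin_sub:
  assumes "c \<in> lin a b" "d \<in> lin a b" "c \<noteq> d"
  shows "lin c d \<subseteq> lin a b"
proof
  fix e assume "e \<in> lin c d"
  then obtain u where e: "e = c + smul u (d - c)" by (auto simp: lin_def)
  obtain s where c: "c = a + smul s (b - a)" using assms(1) by (auto simp: lin_def)
  obtain t where d: "d = a + smul t (b - a)" using assms(2) by (auto simp: lin_def)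
  have "e = a + smul (s + u*(t-s)) (b - a)" unfolding e c d by (simp add: fun_eq_iff algebra_simps)
  then show "e \<in> lin a b" by (auto simp: lin_def)
qed

lemma lin_sup:
  assumes "c \<in> lin a b" "d \<in> lin a b" "c \<noteq> d"
  shows "lin a b \<subseteq> lin c d"
proof
  fix e assume "e \<in> lin a b"
  then obtain u where e: "e = a + smul u (b - a)" by (auto simp: lin_def)
  obtain s where c: "c = a + smul s (b - a)" using assms(1) by (auto simp: lin_def)
  obtain t where d: "d = a + smul t (b - a)" using assms(2) by (auto simp: lin_def)
  have st: "t \<noteq> s" using assms(3) c d by auto
  have "e = c + smul ((u - s)/(t-s)) (d - c)" unfolding e c d using st
    by (simp add: fun_eq_iff field_simps)
  then show "e \<in> lin c d" by (auto simp: lin_def)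
qed

lemma lin_eq:
  assumes "c \<in> lin a b" "d \<in> lin a b" "c \<noteq> d"
  shows "lin c d = lin a b"
  using lin_sub[OF assms] lin_sup[OF assms] by auto

lemma lin_sym: "lin a b = lin b a"
proof (cases "a = b")
  case True then show ?thesis by simp
next
  case False then show ?thesis using lin_eq[of b a b a] by auto
qed

lemma lin_swap3:
  assumes "b \<in> lin a c" "b \<noteq> a"
  shows "c \<in> lin a b"
proof -
  have "lin a b = lin a c" using lin_eq[of a a c b] assms by auto
  then show ?thesis by simp
qed

lemma indepD: "lin_indep2 x y \<Longrightarrow> smul p x + smul q y = 0 \<Longrightarrow> p = 0 \<and> q = 0"
  unfolding lin_indep2_def by simp

lemma indepI: "(\<And>p q. smul p x + smul q y = 0 \<Longrightarrow> p = 0 \<and> q = 0) \<Longrightarrow> lin_indep2 x y"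
  unfolding lin_indep2_def by simp

lemma indep_sym: "lin_indep2 x y \<Longrightarrow> lin_indep2 y x"
  unfolding lin_indep2_def by (metis add.commute vadd_eq vzero_eq)

lemma indep_nz1: "lin_indep2 x y \<Longrightarrow> x \<noteq> 0"
proof
  assume "lin_indep2 x y" "x = 0"
  then have "smul 1 x + smul 0 y = 0" by (simp add: fun_eq_iff)
  then show False using indepD[OF \<open>lin_indep2 x y\<close>, of 1 0] by simp
qed

lemma indep_nz2: "lin_indep2 x y \<Longrightarrow> y \<noteq> 0"
  using indep_nz1 indep_sym by blast

lemma indep_neq: "lin_indep2 x y \<Longrightarrow> x \<noteq> y"
proof
  assume "lin_indep2 x y" "x = y"
  then have "smul 1 x + smul (-1) y = 0" by (simp add: fun_eq_iff)
  then show False using indepD[OF \<open>lin_indep2 x y\<close>, of 1 "-1"] by simp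
qed

lemma nonzero_ex: "(x::nat\<Rightarrow>rat) \<noteq> 0 \<Longrightarrow> \<exists>i. x i \<noteq> 0" by (auto simp: fun_eq_iff)

lemma smul_eq_zero: assumes "smul p x = 0" "x \<noteq> 0" shows "p = 0"
proof -
  obtain i where i: "x i \<noteq> 0" using nonzero_ex[OF assms(2)] by blast
  have "smul p x i = 0" using assms(1) by simp
  then show ?thesis using i by simp
qed

lemma indep_coord:
  assumes "P k = 0" "Q k \<noteq> 0" "P \<noteq> 0"
  shows "lin_indep2 P Q"
proof (rule indepI)
  fix p q assume h: "smul p P + smul q Q = 0"
  have "(smul p P + smul q Q) k = 0" using h by simp
  then have "q * Q k = 0" using assms(1) by simp
  then have q: "q = 0" using assms(2) by simp
  then have "smul p P = 0" using h by (simp add: fun_eq_iff)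
  then show "p = 0 \<and> q = 0" using q smul_eq_zero assms(3) by blast
qed

lemma indep_zero_notin: "lin_indep2 x y \<Longrightarrow> 0 \<notin> lin x y"
proof
  assume i: "lin_indep2 x y" and "0 \<in> lin x y"
  then obtain t where "x + smul t (y - x) = 0" unfolding lin_def by auto
  then have "smul (1-t) x + smul t y = 0" by (simp add: fun_eq_iff algebra_simps)
  then show False using indepD[OF i, of "1-t" t] by auto
qed

lemma indep_combo:
  assumes i: "lin_indep2 x y" and det: "a1*b2 - a2*b1 \<noteq> 0"
  shows "lin_indep2 (smul a1 x + smul a2 y) (smul b1 x + smul b2 y)"
proof (rule indepI)
  fix p q assume h: "smul p (smul a1 x + smul a2 y) + smul q (smul b1 x + smul b2 y) = 0"
  have "smul (p*a1 + q*b1) x + smul (p*a2+q*b2) y = 0" using h by (simp add: fun_eq_iff algebra_simps)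
  then have e1: "p*a1 + q*b1 = 0" and e2: "p*a2+q*b2 = 0" using indepD[OF i] by auto
  have "p * (a1*b2 - a2*b1) = b2*(p*a1 + q*b1) - b1*(p*a2+q*b2)" by (simp add: algebra_simps)
  then have "p = 0" using e1 e2 det by simp
  have "q * (a1*b2 - a2*b1) = a1*(p*a2+q*b2) - a2*(p*a1 + q*b1)" by (simp add: algebra_simps)
  then have "q = 0" using e1 e2 det by simp
  then show "p = 0 \<and> q = 0" using \<open>p = 0\<close> by simp
qed

lemma dep_zero_in:
  assumes "A \<noteq> 0" "B \<noteq> 0" "A \<noteq> B" "\<not> lin_indep2 A B"
  shows "0 \<in> lin A B"
proof -
  obtain p q where h: "smul p A + smul q B = 0" and pq: "\<not>(p = 0 \<and> q = 0)"
    using assms(4) unfolding lin_indep2_def by auto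
  have q: "q \<noteq> 0"
  proof
    assume "q = 0" then have "smul p A = 0" using h by (simp add: fun_eq_iff)
    then show False using smul_eq_zero assms(1) pq \<open>q = 0\<close> by blast
  qed
  have pq2: "p + q \<noteq> 0"
  proof
    assume "p + q = 0" then have "p = -q" by simp
    then have "smul q (B - A) = 0" using h by (simp add: fun_eq_iff algebra_simps)
    then have "B - A = 0" using q by (auto simp: fun_eq_iff)
    then show False using assms(3) by simp
  qed
  have "A + smul (q/(p+q)) (B - A) = 0"
  proof -
    have "\<And>i. p * A i + q * B i = 0" using h by (simp add: fun_eq_iff)
    then show ?thesis
    proof -
      have "\<And>i. (p+q) * (A i + q/(p+q)*(B i - A i)) = p*A i + q*B i" using pq2 by (simp add: field_simps)
      then have "\<And>i. A i + q/(p+q)*(B i - A i) = 0" using \<open>\<And>i. p * A i + q * B i = 0\<close> pq2 by simp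
      then show ?thesis by (simp add: fun_eq_iff)
    qed
  qed
  then show ?thesis unfolding lin_def by (auto intro!: exI[of _ "q/(p+q)"])
qed

locale S =
  fixes R :: "(nat \<Rightarrow> rat) \<Rightarrow> (nat \<Rightarrow> rat) \<Rightarrow> (nat \<Rightarrow> rat) \<Rightarrow> bool"
    and \<tau> :: "(nat \<Rightarrow> rat) \<Rightarrow> (nat \<Rightarrow> rat)"
  assumes aff: "affine_rel R" and bij: "bij_betw \<tau> Mset Mset" and pres: "preserves3 \<tau> R"
begin

lemma tM [intro, simp]: "x \<in> Mset \<Longrightarrow> \<tau> x \<in> Mset" using bij by (auto simp: bij_betw_def)
lemma tinj: "x \<in> Mset \<Longrightarrow> y \<in> Mset \<Longrightarrow> \<tau> x = \<tau> y \<Longrightarrow> x = y"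
  using bij by (auto simp: bij_betw_def inj_on_def)
lemma tsurj: "z \<in> Mset \<Longrightarrow> \<exists>w\<in>Mset. z = \<tau> w"
  using bij by (auto simp: bij_betw_def)
lemma tpres: "a \<in> Mset \<Longrightarrow> b \<in> Mset \<Longrightarrow> c \<in> Mset \<Longrightarrow> R a b c \<longleftrightarrow> R (\<tau> a) (\<tau> b) (\<tau> c)"
  using pres by (simp add: preserves3_def)

lemma line_cond: "x \<in> Mset \<Longrightarrow> y \<in> Mset \<Longrightarrow> z \<in> Mset \<Longrightarrow> x \<noteq> y \<Longrightarrow> R x y z \<Longrightarrow> z \<in> lin x y"
  using aff unfolding affine_rel_def lin_def by auto

lemma table_pt: "\<exists>q. q \<noteq> 0 \<and> q \<noteq> 1 \<and> (\<forall>x y. x \<in> Mset \<longrightarrow> y \<in> Mset \<longrightarrow> lin_indep2 x y \<longrightarrow> R x y (x + smul q (y - x)))"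
proof -
  obtain T where T: "T \<noteq> {}" "has_table R T" "\<forall>(p,q)\<in>T. p \<noteq> 0 \<and> q \<noteq> 0 \<and> p + q = 1"
    using aff unfolding affine_rel_def by blast
  obtain p q where pq: "(p,q) \<in> T" using T(1) by auto
  have h: "p \<noteq> 0" "q \<noteq> 0" "p + q = 1" using T(3) pq by auto
  have "R x y (x + smul q (y - x))" if "x \<in> Mset" "y \<in> Mset" "lin_indep2 x y" for x y
  proof -
    have p: "p = 1 - q" using h by simp
    have e: "x + smul q (y - x) = smul p x + smul q y" unfolding p by (simp add: fun_eq_iff algebra_simps)
    have "x + smul q (y - x) \<in> Mset" using that by auto
    then show ?thesis using T(2) that pq unfolding has_table_def e by auto
  qed
  moreover have "q \<noteq> 1" using h by auto
  ultimately show ?thesis using h by blast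
qed

definition qq where "qq = (SOME q. q \<noteq> 0 \<and> q \<noteq> 1 \<and> (\<forall>x y. x \<in> Mset \<longrightarrow> y \<in> Mset \<longrightarrow> lin_indep2 x y \<longrightarrow> R x y (x + smul q (y - x))))"

lemma qq: "qq \<noteq> 0" "qq \<noteq> 1" "x \<in> Mset \<Longrightarrow> y \<in> Mset \<Longrightarrow> lin_indep2 x y \<Longrightarrow> R x y (x + smul qq (y - x))"
  using someI_ex[OF table_pt] unfolding qq_def[symmetric] by auto

lemma P_indep:
  assumes "lin_indep2 x y" "a \<noteq> b"
  shows "lin_indep2 (x + smul a (y - x)) (x + smul b (y - x))"
proof -
  have "lin_indep2 (smul (1-a) x + smul a y) (smul (1-b) x + smul b y)"
    by (rule indep_combo[OF assms(1)]) (use assms(2) in \<open>simp add: algebra_simps\<close>)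
  moreover have "x + smul a (y - x) = smul (1-a) x + smul a y" "x + smul b (y - x) = smul (1-b) x + smul b y"
    by (simp_all add: fun_eq_iff algebra_simps)
  ultimately show ?thesis by simp
qed

lemma P_comb: "(x + smul a (y - x)) + smul r ((x + smul b (y - x)) - (x + smul a (y - x))) = x + smul (a + r*(b-a)) (y - x)"
  by (simp add: fun_eq_iff algebra_simps)

lemma PA_core:
  assumes xy: "x \<in> Mset" "y \<in> Mset" "lin_indep2 x y" and uv: "u \<noteq> v"
  shows "\<tau> (x + smul (u + of_int k * (v - u)) (y - x)) \<in> lin (\<tau> (x + smul u (y - x))) (\<tau> (x + smul v (y - x)))"
proof -
  define P where "P t = x + smul t (y - x)" for t
  have PM: "P t \<in> Mset" for t unfolding P_def using xy by auto
  have Pi: "a \<noteq> b \<Longrightarrow> lin_indep2 (P a) (P b)" for a b unfolding P_def by (rule P_indep[OF xy(3)])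
  have Pc: "P a + smul r (P b - P a) = P (a + r*(b-a))" for a b r unfolding P_def by (rule P_comb)
  have Pinj: "\<tau> (P a) = \<tau> (P b) \<Longrightarrow> a = b" for a b
    using tinj[OF PM PM] indep_neq[OF Pi] by blast
  define L where "L = lin (\<tau> (P u)) (\<tau> (P v))"
  define PS where "PS = {t. \<tau> (P t) \<in> L}"
  have key: "\<tau> (P c) \<in> L" if "\<tau> (P c) \<in> lin (\<tau> (P a)) (\<tau> (P b))" "a \<in> PS" "b \<in> PS" "a \<noteq> b" for a b c
  proof -
    have "lin (\<tau> (P a)) (\<tau> (P b)) = L" using lin_eq[of "\<tau> (P a)" "\<tau> (P u)" "\<tau> (P v)" "\<tau> (P b)"] that Pinj
      unfolding PS_def L_def by auto
    then show ?thesis using that(1) by simp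
  qed
  have F1: "a + qq*(b-a) \<in> PS" if "a \<in> PS" "b \<in> PS" "a \<noteq> b" for a b
  proof -
    have "R (P a) (P b) (P (a + qq*(b-a)))" using qq(3)[OF PM PM Pi[OF that(3)]] Pc by simp
    then have "R (\<tau> (P a)) (\<tau> (P b)) (\<tau> (P (a + qq*(b-a))))" using tpres PM by blast
    then have "\<tau> (P (a + qq*(b-a))) \<in> lin (\<tau> (P a)) (\<tau> (P b))"
      using line_cond PM Pinj that(3) by blast
    then show ?thesis using key that unfolding PS_def by blast
  qed
  have F2: "a + (b-a)/qq \<in> PS" if "a \<in> PS" "b \<in> PS" "a \<noteq> b" for a b
  proof -
    define c where "c = a + (b-a)/qq"
    have ca: "c \<noteq> a" using that(3) qq(1) unfolding c_def by simp
    have bc: "a + qq*(c-a) = b" using qq(1) unfolding c_def by (simp add: field_simps)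
    have "P a + smul qq (P c - P a) = P b" using Pc[of a qq c] bc by simp
    then have "R (P a) (P c) (P b)" using qq(3)[OF PM PM Pi[OF ca[symmetric]]] by simp
    then have "R (\<tau> (P a)) (\<tau> (P c)) (\<tau> (P b))" using tpres PM by blast
    moreover have "\<tau> (P a) \<noteq> \<tau> (P c)" using Pinj ca by metis
    ultimately have "\<tau> (P b) \<in> lin (\<tau> (P a)) (\<tau> (P c))"
      using line_cond[of "\<tau> (P a)" "\<tau> (P c)" "\<tau> (P b)"] PM by blast
    then have "\<tau> (P c) \<in> lin (\<tau> (P a)) (\<tau> (P b))" using lin_swap3 Pinj that(3) by metis
    then show ?thesis using key that unfolding PS_def c_def by blast
  qed
  have F3: "a + (b-a)/(1-qq) \<in> PS" if "a \<in> PS" "b \<in> PS" "a \<noteq> b" for a b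
  proof -
    define c where "c = a + (b-a)/(1-qq)"
    have q1: "1 - qq \<noteq> 0" using qq(2) by simp
    have ca: "c \<noteq> a" using that(3) q1 unfolding c_def by simp
    have cc0: "(1-qq)*c = (1-qq)*a + (1-qq)*((b-a)/(1-qq))" unfolding c_def by (rule distrib_left)
    have "(1-qq)*((b-a)/(1-qq)) = b - a" using q1 by simp
    then have cc: "(1-qq)*c = (1-qq)*a + (b-a)" using cc0 by simp
    have "c + qq*(a-c) = (1-qq)*c + qq*a" by (simp add: algebra_simps)
    then have bc: "c + qq*(a-c) = b" using cc by (simp add: algebra_simps)
    have "P c + smul qq (P a - P c) = P b" using Pc[of c qq a] bc by simp
    then have "R (P c) (P a) (P b)" using qq(3)[OF PM PM Pi[OF ca]] by simp
    then have "R (\<tau> (P c)) (\<tau> (P a)) (\<tau> (P b))" using tpres PM by blast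
    moreover have "\<tau> (P c) \<noteq> \<tau> (P a)" using Pinj ca by metis
    ultimately have "\<tau> (P b) \<in> lin (\<tau> (P c)) (\<tau> (P a))"
      using line_cond[of "\<tau> (P c)" "\<tau> (P a)" "\<tau> (P b)"] PM by blast
    then have "\<tau> (P c) \<in> lin (\<tau> (P a)) (\<tau> (P b))" using lin_swap3 Pinj that(3) lin_sym by metis
    then show ?thesis using key that unfolding PS_def c_def by blast
  qed
  define G where "G = {r. \<forall>a\<in>PS. \<forall>b\<in>PS. a + r*(b-a) \<in> PS}"
  have triv: "a \<in> PS \<Longrightarrow> a + r*(a-a) \<in> PS" for a r by simp
  have Gq: "qq \<in> G" unfolding G_def
  proof (intro CollectI ballI)
    fix a b assume "a \<in> PS" "b \<in> PS" then show "a + qq*(b-a) \<in> PS"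
      using F1[of a b] by (cases "a = b") auto
  qed
  have Gq2: "1/qq \<in> G" unfolding G_def
  proof (intro CollectI ballI)
    fix a b assume "a \<in> PS" "b \<in> PS" then show "a + 1/qq*(b-a) \<in> PS"
      using F2[of a b] by (cases "a = b") auto
  qed
  have Gq3: "1/(1-qq) \<in> G" unfolding G_def
  proof (intro CollectI ballI)
    fix a b assume "a \<in> PS" "b \<in> PS" then show "a + 1/(1-qq)*(b-a) \<in> PS"
      using F3[of a b] by (cases "a = b") auto
  qed
  have G1: "r \<in> G \<Longrightarrow> 1 - r \<in> G" for r
  proof -
    assume r: "r \<in> G"
    show "1 - r \<in> G" unfolding G_def
    proof (intro CollectI ballI)
      fix a b assume ab: "a \<in> PS" "b \<in> PS"
      have "b + r*(a-b) \<in> PS" using r ab unfolding G_def by blast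
      moreover have "b + r*(a-b) = a + (1-r)*(b-a)" by (simp add: algebra_simps)
      ultimately show "a + (1-r)*(b-a) \<in> PS" by simp
    qed
  qed
  have G2: "r \<in> G \<Longrightarrow> s \<in> G \<Longrightarrow> r * s \<in> G" for r s
  proof -
    assume r: "r \<in> G" and s: "s \<in> G"
    show "r * s \<in> G" unfolding G_def
    proof (intro CollectI ballI)
      fix a b assume ab: "a \<in> PS" "b \<in> PS"
      have "a + s*(b-a) \<in> PS" using s ab unfolding G_def by blast
      then have "a + r*((a + s*(b-a))-a) \<in> PS" using r ab unfolding G_def by blast
      moreover have "a + r*((a + s*(b-a))-a) = a + (r*s)*(b-a)" by (simp add: algebra_simps)
      ultimately show "a + (r*s)*(b-a) \<in> PS" by (simp add: mult.assoc)
    qed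
  qed
  have G0: "0 \<in> G" unfolding G_def by simp
  have Gm1: "-1 \<in> G"
  proof -
    have "1 - 1/(1-qq) \<in> G" using G1[OF Gq3] .
    then have "(1 - 1/(1-qq)) * (1/qq) * (1 - qq) \<in> G" using G2 Gq2 G1[OF Gq] by blast
    moreover have "(1 - 1/(1-qq)) * (1/qq) * (1 - qq) = -1" using qq(1) qq(2)
      by (simp add: field_simps)
    ultimately show ?thesis by simp
  qed
  have Gnat: "of_nat n \<in> G \<and> - of_nat n \<in> G" for n
  proof (induction n)
    case 0 then show ?case using G0 by simp
  next
    case (Suc n)
    then have "1 - (- of_nat n) \<in> G" using G1 by blast
    then have a: "of_nat (Suc n) \<in> G" by (simp add: add.commute)
    then have "(-1) * of_nat (Suc n) \<in> G" using G2 Gm1 by blast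
    then show ?case using a by simp
  qed
  have Gint: "of_int k \<in> G"
  proof (cases "k \<ge> 0")
    case True
    have e: "(of_int k :: rat) = of_nat (nat k)" using True by simp
    have "(of_nat (nat k) :: rat) \<in> G" using Gnat by blast
    then show ?thesis unfolding e .
  next
    case False
    have e: "(of_int k :: rat) = - of_nat (nat (-k))" using False by simp
    have "- (of_nat (nat (-k)) :: rat) \<in> G" using Gnat by blast
    then show ?thesis unfolding e .
  qed
  have "u \<in> PS" "v \<in> PS" unfolding PS_def L_def by auto
  then have "u + of_int k * (v - u) \<in> PS" using Gint unfolding G_def by blast
  then show ?thesis unfolding PS_def L_def P_def by simp
qed

lemma PA:
  assumes xy: "x \<in> Mset" "y \<in> Mset" "lin_indep2 x y"
    and uvw: "u \<in> lin x y" "v \<in> lin x y" "w \<in> lin x y" "u \<noteq> v"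
  shows "\<tau> w \<in> lin (\<tau> u) (\<tau> v)"
proof -
  obtain a b c where abc: "u = x + smul a (y - x)" "v = x + smul b (y - x)" "w = x + smul c (y - x)"
    using uvw unfolding lin_def by auto
  have ab: "a \<noteq> b" using abc uvw(4) by auto
  obtain n m where nm: "quotient_of ((c - a)/(b - a)) = (n, m)" by (cases "quotient_of ((c - a)/(b - a))")
  have m: "m > 0" using quotient_of_denom_pos[OF nm] .
  have r: "(c - a)/(b - a) = of_int n / of_int m" using quotient_of_div[OF nm] .
  define b' where "b' = a + (b - a) / of_int m"
  have ab': "a \<noteq> b'" using ab m unfolding b'_def by simp
  have e1: "c = a + of_int n * (b' - a)" using r ab m unfolding b'_def by (simp add: field_simps)
  have e2: "b = a + of_int m * (b' - a)" using m unfolding b'_def by (simp add: field_simps)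
  have e0: "a = a + of_int 0 * (b' - a)" by simp
  have h: "\<tau> (x + smul (a + of_int k * (b' - a)) (y - x)) \<in> lin (\<tau> (x + smul a (y - x))) (\<tau> (x + smul b' (y - x)))" for k
    using PA_core[OF xy ab'] .
  have "\<tau> w \<in> lin (\<tau> u) (\<tau> v) \<or> \<tau> u = \<tau> v"
  proof -
    have A: "\<tau> u \<in> lin (\<tau> (x + smul a (y - x))) (\<tau> (x + smul b' (y - x)))" using h[of 0] abc by simp
    have B: "\<tau> v \<in> lin (\<tau> (x + smul a (y - x))) (\<tau> (x + smul b' (y - x)))" using h[of m] abc e2 by simp
    have C: "\<tau> w \<in> lin (\<tau> (x + smul a (y - x))) (\<tau> (x + smul b' (y - x)))" using h[of n] abc e1 by simp
    show ?thesis using lin_eq[OF A B] C by auto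
  qed
  moreover have "\<tau> u \<noteq> \<tau> v" using uvw(4) tinj lin_Mset xy uvw by metis
  ultimately show ?thesis by simp
qed

end

lemma smul_one [simp]: "smul 1 x = x" by (simp add: fun_eq_iff)
lemma smul_zero [simp]: "smul 0 x = 0" by (simp add: fun_eq_iff)

lemma supp_fin: "x \<in> Mset \<Longrightarrow> finite {i. x i \<noteq> 0}" by (simp add: Mset_iff)

lemma fresh: "finite (F::nat set) \<Longrightarrow> \<exists>k. k \<notin> F"
  using ex_new_if_finite[OF infinite_UNIV_nat] by auto

definition pl :: "(nat \<Rightarrow> rat) \<Rightarrow> (nat \<Rightarrow> rat) \<Rightarrow> (nat \<Rightarrow> rat) \<Rightarrow> (nat \<Rightarrow> rat) set" where
  "pl A B D = {X. \<exists>s t. X = A + smul s (B - A) + smul t (D - A)}"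

lemma pl_swap: "X \<in> pl B A D \<Longrightarrow> X \<in> pl A B D"
proof -
  assume "X \<in> pl B A D"
  then obtain s t where X: "X = B + smul s (A - B) + smul t (D - B)" by (auto simp: pl_def)
  have "X = A + smul (1 - s - t) (B - A) + smul t (D - A)" unfolding X by (simp add: fun_eq_iff algebra_simps)
  then show ?thesis by (auto simp: pl_def)
qed

lemma pl_A: "A \<in> pl A B D" unfolding pl_def by (auto intro!: exI[of _ 0])
lemma pl_B: "B \<in> pl A B D" unfolding pl_def
  by (rule CollectI, rule exI[of _ 1], rule exI[of _ 0]) (simp add: fun_eq_iff)

lemma pl_inter:
  assumes "X \<in> pl A B D" "X \<in> pl A B D'" "D' \<notin> pl A B D"
  shows "X \<in> lin A B"
proof -
  obtain s t where X1: "X = A + smul s (B - A) + smul t (D - A)" using assms(1) by (auto simp: pl_def)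
  obtain s' t' where X2: "X = A + smul s' (B - A) + smul t' (D' - A)" using assms(2) by (auto simp: pl_def)
  have t': "t' = 0"
  proof (rule ccontr)
    assume t': "t' \<noteq> 0"
    have E: "A i + s * (B i - A i) + t * (D i - A i) = A i + s' * (B i - A i) + t' * (D' i - A i)" for i
    proof -
      have eq: "A + smul s (B - A) + smul t (D - A) = A + smul s' (B - A) + smul t' (D' - A)"
        by (rule trans[OF X1[symmetric] X2])
      show ?thesis using fun_cong[OF eq, of i] by (simp only: plus_fun_apply smul_apply minus_apply)
    qed
    have "D' i = A i + ((s - s')/t') * (B i - A i) + (t/t') * (D i - A i)" for i
    proof -
      have h: "t' * (D' i - A i) = (s - s') * (B i - A i) + t * (D i - A i)"
        using E[of i] by (simp add: algebra_simps)
      have h2: "D' i - A i = ((s - s') * (B i - A i) + t * (D i - A i)) / t'"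
        using h t' by (simp add: field_simps)
      have "((s - s') * (B i - A i) + t * (D i - A i)) / t' = ((s - s')/t') * (B i - A i) + (t/t') * (D i - A i)"
        by (simp add: add_divide_distrib)
      then show ?thesis using h2 by linarith
    qed
    then have "D' = A + smul ((s - s')/t') (B - A) + smul (t/t') (D - A)" by (simp add: fun_eq_iff)
    then have "D' \<in> pl A B D" by (auto simp: pl_def)
    then show False using assms(3) by simp
  qed
  then have "X = A + smul s' (B - A)" using X2 by simp
  then show ?thesis by (auto simp: lin_def)
qed

lemma dep_multiple:
  assumes "w \<noteq> 0" "e \<noteq> 0" "\<not> lin_indep2 w e"
  shows "\<exists>g. g \<noteq> 0 \<and> w = smul g e"
proof -
  obtain p q where h: "smul p w + smul q e = 0" and pq: "\<not>(p = 0 \<and> q = 0)"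
    using assms(3) unfolding lin_indep2_def by auto
  have p: "p \<noteq> 0"
  proof
    assume "p = 0" then have "smul q e = 0" using h by (simp add: fun_eq_iff)
    then show False using smul_eq_zero assms(2) pq \<open>p = 0\<close> by blast
  qed
  have hi: "p * w i + q * e i = 0" for i
  proof -
    have "(smul p w + smul q e) i = 0" using h by simp
    then show ?thesis by simp
  qed
  have w: "w = smul (-q/p) e"
  proof -
    have "w i = (-q/p) * e i" for i
    proof -
      have "p * w i = - q * e i" using hi[of i] by simp
      then show ?thesis using p by (simp add: field_simps)
    qed
    then show ?thesis by (simp add: fun_eq_iff)
  qed
  have "-q/p \<noteq> 0"
  proof
    assume h0: "-q/p = 0"
    have "w = smul 0 e" using w unfolding h0 .
    then show False using assms(1) by simp
  qed
  then show ?thesis using w by blast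
qed

lemma fresh_notin_pl:
  assumes "A k = 0" "B k = 0" "D k = 0"
  shows "dl k \<notin> pl A B D"
proof
  assume "dl k \<in> pl A B D"
  then obtain s t where "dl k = A + smul s (B - A) + smul t (D - A)" by (auto simp: pl_def)
  then have "dl k k = (A + smul s (B - A) + smul t (D - A)) k" by simp
  then show False using assms by simp
qed

context S
begin

lemma Kcons:
  assumes e: "e \<in> Mset" "e \<noteq> 0" and d: "d \<in> Mset" "lin_indep2 d e"
    and ab: "\<alpha> \<noteq> 0" "\<beta> \<noteq> 0" "\<gamma> \<noteq> 0" "\<alpha> \<noteq> \<beta>" "\<gamma> \<noteq> 2*\<alpha> - \<beta>"
  shows "\<tau> (smul \<gamma> e) \<in> pl (\<tau> (smul \<alpha> e)) (\<tau> (smul \<beta> e)) (\<tau> d)"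
proof -
  define a where "a = smul \<alpha> e"
  define b where "b = smul \<beta> e"
  define c where "c = smul \<gamma> e"
  have M: "a \<in> Mset" "b \<in> Mset" "c \<in> Mset" using e unfolding a_def b_def c_def by auto
  have ida: "lin_indep2 d a"
  proof -
    have "lin_indep2 (smul 1 d + smul 0 e) (smul 0 d + smul \<alpha> e)"
      by (rule indep_combo[OF d(2)]) (use ab in simp)
    then show ?thesis unfolding a_def by simp
  qed
  have idb: "lin_indep2 d b"
  proof -
    have "lin_indep2 (smul 1 d + smul 0 e) (smul 0 d + smul \<beta> e)"
      by (rule indep_combo[OF d(2)]) (use ab in simp)
    then show ?thesis unfolding b_def by simp
  qed
  define s where "s = (\<gamma> - \<beta>)/(2*(\<alpha> - \<beta>))"
  define t where "t = 2*s - 1"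
  have s2: "s * (2*(\<alpha> - \<beta>)) = \<gamma> - \<beta>" using ab(4) unfolding s_def by simp
  have s1: "s \<noteq> 1"
  proof
    assume "s = 1" then show False using s2 ab(5) by (simp add: algebra_simps)
  qed
  define a1 where "a1 = d + smul s (a - d)"
  define b1 where "b1 = d + smul t (b - d)"
  have a1l: "a1 \<in> lin d a" unfolding a1_def lin_def by auto
  have b1l: "b1 \<in> lin d b" unfolding b1_def lin_def by auto
  have ta1: "\<tau> a1 \<in> lin (\<tau> d) (\<tau> a)"
    using PA[OF d(1) M(1) ida lin_left lin_right a1l indep_neq[OF ida]] .
  have tb1: "\<tau> b1 \<in> lin (\<tau> d) (\<tau> b)"
    using PA[OF d(1) M(2) idb lin_left lin_right b1l indep_neq[OF idb]] .
  have a1e: "a1 = smul (1-s) d + smul (s*\<alpha>) e" unfolding a1_def a_def by (simp add: fun_eq_iff algebra_simps)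
  have b1e: "b1 = smul (1-t) d + smul (t*\<beta>) e" unfolding b1_def b_def by (simp add: fun_eq_iff algebra_simps)
  have det: "(1-s)*(t*\<beta>) - (s*\<alpha>)*(1-t) = -(1-s)*\<gamma>"
  proof -
    have "(1-s)*(t*\<beta>) - (s*\<alpha>)*(1-t) = (1-s)*(-(s * (2*(\<alpha> - \<beta>))) - \<beta>)"
      unfolding t_def by (simp add: algebra_simps)
    also have "\<dots> = -(1-s)*\<gamma>" using s2 by (simp add: algebra_simps)
    finally show ?thesis .
  qed
  have detnz: "(1-s)*(t*\<beta>) - (s*\<alpha>)*(1-t) \<noteq> 0" unfolding det using s1 ab(3) by simp
  have iab: "lin_indep2 a1 b1" unfolding a1e b1e by (rule indep_combo[OF d(2) detnz])
  have a1M: "a1 \<in> Mset" "b1 \<in> Mset" using d M unfolding a1_def b1_def by auto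
  have cl: "c \<in> lin a1 b1"
  proof -
    have "c = a1 + smul (-1) (b1 - a1)"
    proof -
      have k1: "2 * (s * \<alpha>) - t * \<beta> = \<gamma>" using s2 unfolding t_def by (simp add: algebra_simps)
      have k2: "2 * (1 - s) - (1 - t) = 0" unfolding t_def by simp
      have "a1 i + (-1)*(b1 i - a1 i) = (2 * (1 - s) - (1 - t)) * d i + (2 * (s * \<alpha>) - t * \<beta>) * e i" for i
        unfolding a1e b1e by (simp add: algebra_simps)
      then have "a1 i + (-1)*(b1 i - a1 i) = c i" for i unfolding k1 k2 c_def by simp
      then show ?thesis by (simp add: fun_eq_iff)
    qed
    then show ?thesis unfolding lin_def by blast
  qed
  have tc: "\<tau> c \<in> lin (\<tau> a1) (\<tau> b1)"
    using PA[OF a1M iab lin_left lin_right cl indep_neq[OF iab]] .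
  obtain r1 where r1: "\<tau> a1 = \<tau> d + smul r1 (\<tau> a - \<tau> d)" using ta1 by (auto simp: lin_def)
  obtain r2 where r2: "\<tau> b1 = \<tau> d + smul r2 (\<tau> b - \<tau> d)" using tb1 by (auto simp: lin_def)
  obtain r3 where r3: "\<tau> c = \<tau> a1 + smul r3 (\<tau> b1 - \<tau> a1)" using tc by (auto simp: lin_def)
  have "\<tau> c = \<tau> a + smul (r3*r2) (\<tau> b - \<tau> a) + smul ((1 - r1) + r3*(r1 - r2)) (\<tau> d - \<tau> a)"
    unfolding r3 r1 r2 by (simp add: fun_eq_iff algebra_simps)
  then show ?thesis unfolding pl_def a_def b_def c_def by blast
qed

lemma Kcons2:
  assumes e: "e \<in> Mset" "e \<noteq> 0" and d: "d \<in> Mset" "lin_indep2 d e"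
    and ab: "\<alpha> \<noteq> 0" "\<beta> \<noteq> 0" "\<gamma> \<noteq> 0" "\<alpha> \<noteq> \<beta>"
  shows "\<tau> (smul \<gamma> e) \<in> pl (\<tau> (smul \<alpha> e)) (\<tau> (smul \<beta> e)) (\<tau> d)"
proof (cases "\<gamma> = 2*\<alpha> - \<beta>")
  case False then show ?thesis using Kcons[OF e d ab] by blast
next
  case True
  then have "\<gamma> \<noteq> 2*\<beta> - \<alpha>" using ab(4) by simp
  then have "\<tau> (smul \<gamma> e) \<in> pl (\<tau> (smul \<beta> e)) (\<tau> (smul \<alpha> e)) (\<tau> d)"
    using Kcons[OF e d ab(2) ab(1) ab(3) ab(4)[symmetric]] by blast
  then show ?thesis by (rule pl_swap)
qed

lemma B1:
  assumes e: "e \<in> Mset" "e \<noteq> 0" and ab: "\<alpha> \<noteq> 0" "\<beta> \<noteq> 0" "\<gamma> \<noteq> 0" "\<alpha> \<noteq> \<beta>"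
  shows "\<tau> (smul \<gamma> e) \<in> lin (\<tau> (smul \<alpha> e)) (\<tau> (smul \<beta> e))"
proof -
  define A where "A = \<tau> (smul \<alpha> e)"
  define B where "B = \<tau> (smul \<beta> e)"
  have allpl: "\<tau> (smul g e) \<in> pl A B (\<tau> d)" if "d \<in> Mset" "lin_indep2 d e" "g \<noteq> 0" for d g
  proof (cases "g = \<alpha> \<or> g = \<beta>")
    case True then show ?thesis unfolding A_def B_def using pl_A pl_B by blast
  next
    case False then show ?thesis unfolding A_def B_def using Kcons2[OF e that(1,2) ab(1,2) that(3) ab(4)] by blast
  qed
  obtain k where k: "k \<notin> {i. e i \<noteq> 0}" using fresh[OF supp_fin[OF e(1)]] by blast
  define d0 where "d0 = dl k"
  have d0: "d0 \<in> Mset" "lin_indep2 d0 e" unfolding d0_def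
    using indep_sym[OF indep_coord[of e k "dl k"]] k e(2) by auto
  have ex: "\<exists>d'. d' \<in> Mset \<and> lin_indep2 d' e \<and> \<tau> d' \<notin> pl A B (\<tau> d0)"
  proof (rule ccontr)
    assume nex: "\<not> ?thesis"
    have all: "z \<in> pl A B (\<tau> d0)" if z: "z \<in> Mset" "z \<noteq> \<tau> 0" for z
    proof -
      obtain w where w: "w \<in> Mset" "z = \<tau> w" using tsurj[OF z(1)] by blast
      have wnz: "w \<noteq> 0" using w z(2) by auto
      show ?thesis
      proof (cases "lin_indep2 w e")
        case True then show ?thesis using nex w by blast
      next
        case False
        obtain g where g: "g \<noteq> 0" "w = smul g e" using dep_multiple[OF wnz e(2) False] by blast
        then show ?thesis using allpl[OF d0 g(1)] w by simp
      qed
    qed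
    have fin: "finite ({i. A i \<noteq> 0} \<union> {i. B i \<noteq> 0} \<union> {i. \<tau> d0 i \<noteq> 0} \<union> {i. \<tau> 0 i \<noteq> 0})"
      using supp_fin tM Mset_smul e d0 unfolding A_def B_def by auto
    obtain m where m: "m \<notin> {i. A i \<noteq> 0} \<union> {i. B i \<noteq> 0} \<union> {i. \<tau> d0 i \<noteq> 0} \<union> {i. \<tau> 0 i \<noteq> 0}"
      using fresh[OF fin] by blast
    have "dl m \<noteq> \<tau> 0"
    proof
      assume "dl m = \<tau> 0" then have "dl m m = \<tau> 0 m" by simp
      then show False using m by simp
    qed
    then have "dl m \<in> pl A B (\<tau> d0)" using all by simp
    moreover have "dl m \<notin> pl A B (\<tau> d0)" by (rule fresh_notin_pl) (use m in auto)
    ultimately show False by simp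
  qed
  then obtain d' where d': "d' \<in> Mset" "lin_indep2 d' e" "\<tau> d' \<notin> pl A B (\<tau> d0)" by blast
  show ?thesis
    using pl_inter[OF allpl[OF d0 ab(3)] allpl[OF d'(1,2) ab(3)] d'(3)] unfolding A_def B_def .
qed

lemma COL:
  assumes p: "p \<in> Mset" "p' \<in> Mset" "p \<noteq> 0" "p' \<noteq> 0" "p \<noteq> p'" and n: "n \<in> lin p p'" "n \<noteq> 0"
  shows "\<tau> n \<in> lin (\<tau> p) (\<tau> p')"
proof (cases "lin_indep2 p p'")
  case True show ?thesis using PA[OF p(1,2) True lin_left lin_right n(1) p(5)] .
next
  case False
  obtain c where c: "c \<noteq> 0" "p' = smul c p" using dep_multiple[OF p(4) p(3)] False indep_sym by blast
  have c1: "c \<noteq> 1" using c p(5) by auto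
  obtain t where t: "n = p + smul t (p' - p)" using n(1) by (auto simp: lin_def)
  have ne: "n = smul (1 + t*(c-1)) p" unfolding t c by (simp add: fun_eq_iff algebra_simps)
  have g: "1 + t*(c-1) \<noteq> 0" using n(2) ne by auto
  have "\<tau> (smul (1 + t*(c-1)) p) \<in> lin (\<tau> (smul 1 p)) (\<tau> (smul c p))"
    by (rule B1[OF p(1,3)]) (use c c1 g in auto)
  then show ?thesis using ne c by simp
qed

end

lemma combo_eq:
  assumes i: "lin_indep2 x y" and e: "smul a x + smul b y = smul a' x + smul b' y"
  shows "a = a' \<and> b = b'"
proof -
  have "smul (a - a') x + smul (b - b') y = 0"
  proof -
    have "(smul a x + smul b y) i = (smul a' x + smul b' y) i" for i using e by simp
    then show ?thesis by (simp add: fun_eq_iff algebra_simps)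
  qed
  then have "a - a' = 0 \<and> b - b' = 0" using indepD[OF i, of "a-a'" "b-b'"] by blast
  then show ?thesis by simp
qed

lemma lin_in_pl: "z \<in> lin A B \<Longrightarrow> z \<in> pl A B D"
proof -
  assume "z \<in> lin A B"
  then obtain t where "z = A + smul t (B - A)" by (auto simp: lin_def)
  then have "z = A + smul t (B - A) + smul 0 (D - A)" by simp
  then show ?thesis unfolding pl_def by blast
qed

lemma lin_in_pl2: "z \<in> lin A D \<Longrightarrow> z \<in> pl A B D"
proof -
  assume "z \<in> lin A D"
  then obtain t where "z = A + smul t (D - A)" by (auto simp: lin_def)
  then have "z = A + smul 0 (B - A) + smul t (D - A)" by simp
  then show ?thesis unfolding pl_def by blast
qed

lemma pl_lin:
  assumes "P \<in> pl A B D" "Q \<in> pl A B D" "z \<in> lin P Q"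
  shows "z \<in> pl A B D"
proof -
  obtain s t where P: "P = A + smul s (B - A) + smul t (D - A)" using assms(1) by (auto simp: pl_def)
  obtain s' t' where Q: "Q = A + smul s' (B - A) + smul t' (D - A)" using assms(2) by (auto simp: pl_def)
  obtain r where z: "z = P + smul r (Q - P)" using assms(3) by (auto simp: lin_def)
  have "z = A + smul (s + r*(s' - s)) (B - A) + smul (t + r*(t'-t)) (D - A)"
    unfolding z P Q by (simp add: fun_eq_iff algebra_simps)
  then show ?thesis unfolding pl_def by blast
qed

lemma PAR:
  assumes AB: "A \<in> pl P Q W" "B \<in> pl P Q W" "C \<in> pl P Q W" "D \<in> pl P Q W" "A \<noteq> B"
    and disj: "lin A B \<inter> lin C D = {}"
  shows "\<exists>k. D - C = smul k (B - A)"
proof -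
  define u where "u = Q - P"
  define v where "v = W - P"
  obtain a1 a2 where A: "A = P + smul a1 u + smul a2 v" using AB(1) unfolding pl_def u_def v_def by blast
  obtain b1 b2 where B: "B = P + smul b1 u + smul b2 v" using AB(2) unfolding pl_def u_def v_def by blast
  obtain c1 c2 where C: "C = P + smul c1 u + smul c2 v" using AB(3) unfolding pl_def u_def v_def by blast
  obtain d1 d2 where D: "D = P + smul d1 u + smul d2 v" using AB(4) unfolding pl_def u_def v_def by blast
  define \<alpha>1 where "\<alpha>1 = b1 - a1"
  define \<alpha>2 where "\<alpha>2 = b2 - a2"
  define \<gamma>1 where "\<gamma>1 = d1 - c1"
  define \<gamma>2 where "\<gamma>2 = d2 - c2"
  define e1 where "e1 = c1 - a1"
  define e2 where "e2 = c2 - a2"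
  have BA: "B - A = smul \<alpha>1 u + smul \<alpha>2 v" unfolding A B \<alpha>1_def \<alpha>2_def by (simp add: fun_eq_iff algebra_simps)
  have DC: "D - C = smul \<gamma>1 u + smul \<gamma>2 v" unfolding C D \<gamma>1_def \<gamma>2_def by (simp add: fun_eq_iff algebra_simps)
  have CA: "C = A + smul e1 u + smul e2 v" unfolding A C e1_def e2_def by (simp add: fun_eq_iff algebra_simps)
  have det: "\<alpha>1 * \<gamma>2 - \<alpha>2 * \<gamma>1 = 0"
  proof (rule ccontr)
    assume dt: "\<alpha>1 * \<gamma>2 - \<alpha>2 * \<gamma>1 \<noteq> 0"
    define s where "s = (\<gamma>2 * e1 - \<gamma>1 * e2) / (\<alpha>1 * \<gamma>2 - \<alpha>2 * \<gamma>1)"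
    define t where "t = (\<alpha>2 * e1 - \<alpha>1 * e2) / (\<alpha>1 * \<gamma>2 - \<alpha>2 * \<gamma>1)"
    have h1: "s * \<alpha>1 = e1 + t * \<gamma>1" unfolding s_def t_def using dt by (simp add: field_simps; (simp add: algebra_simps)?)
    have h2: "s * \<alpha>2 = e2 + t * \<gamma>2" unfolding s_def t_def using dt by (simp add: field_simps; (simp add: algebra_simps)?)
    have "A + smul s (B - A) = C + smul t (D - C)"
    proof -
      have "A + smul s (B - A) = A + smul (s * \<alpha>1) u + smul (s * \<alpha>2) v" unfolding BA by (simp add: fun_eq_iff algebra_simps)
      also have "\<dots> = A + smul (e1 + t * \<gamma>1) u + smul (e2 + t * \<gamma>2) v" unfolding h1 h2 ..
      also have "\<dots> = C + smul t (D - C)" by (simp only: DC) (simp add: CA fun_eq_iff algebra_simps)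
      finally show ?thesis .
    qed
    then have "A + smul s (B - A) \<in> lin C D" unfolding lin_def by blast
    moreover have "A + smul s (B - A) \<in> lin A B" unfolding lin_def by blast
    ultimately have "A + smul s (B - A) \<in> lin A B \<inter> lin C D" by blast
    then show False using disj by simp
  qed
  show ?thesis
  proof (cases "\<alpha>1 = 0")
    case False
    have "D - C = smul (\<gamma>1/\<alpha>1) (B - A)"
    proof -
      have "\<gamma>2 = (\<gamma>1/\<alpha>1) * \<alpha>2" using det False by (simp add: field_simps; (simp add: algebra_simps)?)
      moreover have "\<gamma>1 = (\<gamma>1/\<alpha>1) * \<alpha>1" using False by simp
      ultimately have "D - C = smul ((\<gamma>1/\<alpha>1) * \<alpha>1) u + smul ((\<gamma>1/\<alpha>1) * \<alpha>2) v" unfolding DC by simp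
      then show ?thesis unfolding BA by (simp add: fun_eq_iff algebra_simps)
    qed
    then show ?thesis by blast
  next
    case True
    have a2: "\<alpha>2 \<noteq> 0"
    proof
      assume "\<alpha>2 = 0" then have "B - A = 0" unfolding BA using True by (simp add: fun_eq_iff)
      then show False using AB(5) by simp
    qed
    have g1: "\<gamma>1 = 0" using det True a2 by simp
    have "D - C = smul (\<gamma>2/\<alpha>2) (B - A)"
    proof -
      have "\<gamma>2 = (\<gamma>2/\<alpha>2) * \<alpha>2" using a2 by simp
      then have "D - C = smul ((\<gamma>2/\<alpha>2) * \<alpha>1) u + smul ((\<gamma>2/\<alpha>2) * \<alpha>2) v" unfolding DC using g1 True by simp
      then show ?thesis unfolding BA by (simp add: fun_eq_iff algebra_simps)
    qed
    then show ?thesis by blast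
  qed
qed

context S
begin

abbreviation \<iota> where "\<iota> \<equiv> inv_into Mset \<tau>"

lemma tim: "\<tau> ` Mset = Mset" using bij by (simp add: bij_betw_def)
lemma iM [intro, simp]: assumes "y \<in> Mset" shows "\<iota> y \<in> Mset"
  using inv_into_into[of y \<tau> Mset] assms tim by simp
lemma t_i [simp]: assumes "y \<in> Mset" shows "\<tau> (\<iota> y) = y"
  using f_inv_into_f[of y \<tau> Mset] assms tim by simp
lemma i_t [simp]: assumes "x \<in> Mset" shows "\<iota> (\<tau> x) = x"
  using inv_into_f_f[of \<tau> Mset x] assms bij by (simp add: bij_betw_def)

lemma inv_S: "S R \<iota>"
proof
  show "affine_rel R" by (rule aff)
  show "bij_betw \<iota> Mset Mset" by (rule bij_betw_inv_into[OF bij])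
  show "preserves3 \<iota> R" unfolding preserves3_def
  proof (intro ballI)
    fix a b c assume abc: "a \<in> Mset" "b \<in> Mset" "c \<in> Mset"
    show "R a b c = R (\<iota> a) (\<iota> b) (\<iota> c)" using tpres[of "\<iota> a" "\<iota> b" "\<iota> c"] abc by simp
  qed
qed

lemma t0_iff: "\<tau> 0 = 0 \<longleftrightarrow> \<iota> 0 = 0"
  by (metis Mset_zero i_t t_i)

lemma pullback:
  assumes P: "P1 \<in> Mset" "P2 \<in> Mset" "\<tau> P1 \<noteq> 0" "\<tau> P2 \<noteq> 0" "P1 \<noteq> P2"
    and z: "z \<in> lin (\<tau> P1) (\<tau> P2)" "z \<noteq> 0"
  shows "\<exists>w\<in>Mset. z = \<tau> w \<and> w \<in> lin P1 P2"
proof -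
  have ne: "\<tau> P1 \<noteq> \<tau> P2" using P tinj by blast
  have "\<iota> z \<in> lin (\<iota> (\<tau> P1)) (\<iota> (\<tau> P2))"
    using S.COL[OF inv_S, of "\<tau> P1" "\<tau> P2" z] P ne z by auto
  then have "\<iota> z \<in> lin P1 P2" using P by simp
  moreover have "z \<in> Mset" using lin_Mset[OF tM tM z(1)] P by auto
  ultimately show ?thesis by (intro bexI[of _ "\<iota> z"]) auto
qed

lemma tnz: "x \<in> Mset \<Longrightarrow> x \<noteq> \<iota> 0 \<Longrightarrow> \<tau> x \<noteq> 0"
  by (metis Mset_zero i_t)

lemma LX1:
  assumes xy: "x \<in> Mset" "y \<in> Mset" "lin_indep2 x y" and oo: "\<iota> 0 \<noteq> 0" "\<iota> 0 \<notin> lin x y"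
    and dep: "\<not> lin_indep2 (\<tau> x) (\<tau> y)"
  shows False
proof -
  define oo where "oo = \<iota> 0"
  have oM: "oo \<in> Mset" unfolding oo_def by simp
  have to: "\<tau> oo = 0" unfolding oo_def by simp
  have xo: "x \<noteq> oo" "y \<noteq> oo" using oo(2) unfolding oo_def by auto
  have txy: "\<tau> x \<noteq> 0" "\<tau> y \<noteq> 0" using tnz xy xo unfolding oo_def by auto
  have txy2: "\<tau> x \<noteq> \<tau> y" using tinj xy indep_neq by blast
  have z: "0 \<in> lin (\<tau> x) (\<tau> y)" using dep_zero_in[OF txy txy2 dep] .
  define n2 where "n2 = oo + smul 2 (x - oo)"
  define n3 where "n3 = oo + smul 3 (x - oo)"
  have "n2 \<noteq> 0 \<or> n3 \<noteq> 0"
  proof (rule ccontr)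
    assume "\<not> ?thesis"
    then have "n3 - n2 = 0" by simp
    then have "x - oo = 0" unfolding n2_def n3_def by (simp add: fun_eq_iff algebra_simps)
    then show False using xo by simp
  qed
  then obtain n k where n: "n = oo + smul k (x - oo)" "n \<noteq> 0" "k \<noteq> 0" "k \<noteq> 1"
    unfolding n2_def n3_def by fastforce
  have nM: "n \<in> Mset" using n oM xy by auto
  have no: "n \<noteq> oo"
  proof
    assume "n = oo" then have "smul k (x - oo) = 0" using n(1) by (simp add: fun_eq_iff)
    then have "x - oo = 0" using n(3) by (auto simp: fun_eq_iff)
    then show False using xo by simp
  qed
  have nx: "n \<noteq> x"
  proof
    assume "n = x" then have "smul (k - 1) (x - oo) = 0" using n(1) by (simp add: fun_eq_iff algebra_simps)
    then have "x - oo = 0" using n(4) by (auto simp: fun_eq_iff)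
    then show False using xo by simp
  qed
  have nl: "n \<in> lin oo x" unfolding lin_def using n(1) by blast
  have "\<tau> n \<in> lin (\<tau> oo) (\<tau> x)"
    by (rule COL[OF oM xy(1) _ indep_nz1[OF xy(3)] xo(1)[symmetric] nl n(2)]) (use oo(1) in \<open>simp add: oo_def\<close>)
  then have tn: "\<tau> n \<in> lin 0 (\<tau> x)" using to by simp
  have "lin 0 (\<tau> x) \<subseteq> lin (\<tau> x) (\<tau> y)" by (rule lin_sub[OF z lin_left]) (use txy in auto)
  then have "\<tau> n \<in> lin (\<tau> x) (\<tau> y)" using tn by blast
  moreover have "\<tau> n \<noteq> 0" using tnz[OF nM] no unfolding oo_def by simp
  ultimately obtain w where w: "w \<in> Mset" "\<tau> n = \<tau> w" "w \<in> lin x y"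
    using pullback[OF xy(1,2) txy indep_neq[OF xy(3)]] by blast
  have "w = n" using tinj[OF w(1) nM] w(2) by simp
  then have nxy: "n \<in> lin x y" using w(3) by simp
  have e1: "lin n x = lin x y" by (rule lin_eq[OF nxy lin_left nx])
  have e2: "lin n x = lin oo x" by (rule lin_eq[OF nl lin_right nx])
  have "oo \<in> lin x y" using e1 e2 lin_left by blast
  then show False using oo(2) unfolding oo_def by simp
qed

end

lemma pl_D: "D \<in> pl A B D"
proof -
  have "D = A + smul 0 (B - A) + smul 1 (D - A)" by (simp add: fun_eq_iff)
  then show ?thesis unfolding pl_def by blast
qed

context S
begin

lemma pullback2:
  assumes P: "P1 \<in> Mset" "P2 \<in> Mset" "\<tau> P1 \<noteq> 0" "\<tau> P2 \<noteq> 0" "P1 \<noteq> P2"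
    and w: "w \<in> Mset" "\<tau> w \<in> lin (\<tau> P1) (\<tau> P2)" "\<tau> w \<noteq> 0"
  shows "w \<in> lin P1 P2"
proof -
  obtain w' where w': "w' \<in> Mset" "\<tau> w = \<tau> w'" "w' \<in> lin P1 P2" using pullback[OF P w(2,3)] by blast
  then show ?thesis using tinj[OF w(1) w'(1)] by simp
qed

lemma LX0:
  assumes xy: "x \<in> Mset" "y \<in> Mset" "lin_indep2 x y" and t0: "\<tau> 0 = 0"
    and dep: "\<not> lin_indep2 (\<tau> x) (\<tau> y)"
  shows False
proof -
  have tn: "\<tau> w \<noteq> 0" if "w \<in> Mset" "w \<noteq> 0" for w
    using tinj[OF that(1) Mset_zero] t0 that(2) by auto
  define cb where "cb a b = smul a x + smul b y" for a b
  have cbM: "cb a b \<in> Mset" for a b unfolding cb_def using xy by auto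
  have cb_eq: "cb a b = cb a' b' \<Longrightarrow> a = a' \<and> b = b'" for a b a' b'
    unfolding cb_def using combo_eq[OF xy(3)] by blast
  have cb_lin: "cb (a + t*(a'-a)) (b + t*(b'-b)) \<in> lin (cb a b) (cb a' b')" for a b a' b' t
  proof -
    have "cb (a + t*(a'-a)) (b + t*(b'-b)) = cb a b + smul t (cb a' b' - cb a b)"
      unfolding cb_def by (simp add: fun_eq_iff algebra_simps)
    then show ?thesis unfolding lin_def by blast
  qed
  have cb_linD: "z \<in> lin (cb a b) (cb a' b') \<Longrightarrow> \<exists>t. z = cb (a + t*(a'-a)) (b + t*(b'-b))" for z a b a' b'
  proof -
    assume "z \<in> lin (cb a b) (cb a' b')"
    then obtain t where "z = cb a b + smul t (cb a' b' - cb a b)" unfolding lin_def by blast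
    then have "z = cb (a + t*(a'-a)) (b + t*(b'-b))" unfolding cb_def by (simp add: fun_eq_iff algebra_simps)
    then show ?thesis by blast
  qed
  have cbx: "x = cb 1 0" and cby: "y = cb 0 1" unfolding cb_def by (simp_all add: fun_eq_iff)
  have cb_ne: "cb a b \<noteq> cb a' b'" if "a \<noteq> a' \<or> b \<noteq> b'" for a b a' b'
    using cb_eq[of a b a' b'] that by blast
  have tcb_ne: "\<tau> (cb a b) \<noteq> \<tau> (cb a' b')" if "a \<noteq> a' \<or> b \<noteq> b'" for a b a' b'
    using cb_ne[OF that] tinj[OF cbM cbM] by blast
  have cb0: "cb 0 0 = 0" unfolding cb_def by (simp add: fun_eq_iff)
  have cbnz: "cb a b \<noteq> 0" if "a \<noteq> 0 \<or> b \<noteq> 0" for a b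
    using cb_eq[of a b 0 0] cb0 that by auto
  have cbsm: "smul s (cb a b) = cb (s*a) (s*b)" for s a b unfolding cb_def by (simp add: fun_eq_iff algebra_simps)
  define L where "L = lin (cb 1 0) (cb 0 1)"
  have inL: "cb a b \<in> L" if h: "a + b = 1" for a b
  proof -
    have "a = 1 - b" using h by simp
    then show ?thesis using cb_lin[of 1 b 0 0 1] unfolding L_def by simp
  qed
  have inLD: "a + b = 1" if h: "cb a b \<in> L" for a b
  proof -
    obtain t where "cb a b = cb (1 + t*(0-1)) (0 + t*(1-0))" using cb_linD h unfolding L_def by blast
    then have "a = 1 + t*(0-1) \<and> b = 0 + t*(1-0)" by (rule cb_eq)
    then show ?thesis by simp
  qed
  define Lam where "Lam = lin (\<tau> (cb 1 0)) (\<tau> (cb 0 1))"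
  have ne10: "cb 1 0 \<noteq> cb 0 1" by (rule cb_ne) simp
  have tx: "\<tau> (cb 1 0) \<noteq> 0" "\<tau> (cb 0 1) \<noteq> 0" using tn cbM cbnz by auto
  have txy: "\<tau> (cb 1 0) \<noteq> \<tau> (cb 0 1)" using tinj cbM ne10 by blast
  have ind: "lin_indep2 (cb 1 0) (cb 0 1)" using xy(3) cbx cby by simp
  have zLam: "0 \<in> Lam" unfolding Lam_def using dep_zero_in[OF tx txy] dep cbx cby by simp
  have PAL: "\<tau> z \<in> Lam" if "z \<in> L" for z
    unfolding Lam_def using PA[OF cbM cbM ind lin_left lin_right that[unfolded L_def] ne10] .
  have bkL: "w \<in> L" if "w \<in> Mset" "\<tau> w \<in> Lam" "\<tau> w \<noteq> 0" for w
    unfolding L_def using pullback2[OF cbM cbM tx ne10 that[unfolded Lam_def]] .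
  have zL: "0 \<notin> L" unfolding L_def by (rule indep_zero_notin[OF ind])
  have good: "lin_indep2 (\<tau> r) (\<tau> q)" if q: "q \<in> L" and r: "r \<in> Mset" "r \<notin> L" "r \<noteq> 0" for q r
  proof (rule ccontr)
    assume nd: "\<not> lin_indep2 (\<tau> r) (\<tau> q)"
    have qM: "q \<in> Mset" using q unfolding L_def using lin_Mset cbM by blast
    have q0: "q \<noteq> 0" using q zL by auto
    have rq: "r \<noteq> q" using q r by auto
    have t1: "\<tau> r \<noteq> 0" "\<tau> q \<noteq> 0" using tn r qM q0 by auto
    have t2: "\<tau> r \<noteq> \<tau> q" using tinj r(1) qM rq by blast
    have z: "0 \<in> lin (\<tau> r) (\<tau> q)" using dep_zero_in[OF t1 t2 nd] .
    have e1: "lin 0 (\<tau> q) = lin (\<tau> r) (\<tau> q)" by (rule lin_eq[OF z lin_right]) (use t1 in auto)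
    have e2: "lin 0 (\<tau> q) = Lam" unfolding Lam_def by (rule lin_eq[OF zLam[unfolded Lam_def] PAL[OF q, unfolded Lam_def]]) (use t1 in auto)
    have "\<tau> r \<in> Lam" using e1 e2 lin_left by blast
    then have "r \<in> L" using bkL r t1 by blast
    then show False using r by simp
  qed
  have backk: "w \<in> lin r q" if "q \<in> L" "r \<in> Mset" "r \<notin> L" "r \<noteq> 0" "w \<in> Mset" "\<tau> w \<in> lin (\<tau> r) (\<tau> q)" for q r w
  proof -
    have qM: "q \<in> Mset" using that(1) unfolding L_def using lin_Mset cbM by blast
    have g: "lin_indep2 (\<tau> r) (\<tau> q)" using good that by blast
    have "\<tau> w \<noteq> 0" using indep_zero_notin[OF g] that(6) by auto
    moreover have "\<tau> r \<noteq> 0" "\<tau> q \<noteq> 0" using indep_nz1[OF g] indep_nz2[OF g] by auto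
    moreover have "r \<noteq> q" using that by auto
    ultimately show ?thesis using pullback2[OF that(2) qM] that by blast
  qed
  have NU: "lin_indep2 (\<tau> (cb a b)) (\<tau> (cb (2*a) (2*b)))" if ab: "a + b = 1" for a b
  proof (rule ccontr)
    assume nd: "\<not> ?thesis"
    have ab0: "a \<noteq> 0 \<or> b \<noteq> 0" using ab by auto
    have ne: "cb a b \<noteq> cb (2*a) (2*b)" by (rule cb_ne) (use ab0 in auto)
    have t1: "\<tau> (cb a b) \<noteq> 0" "\<tau> (cb (2*a) (2*b)) \<noteq> 0" using tn cbM cbnz ab0 by auto
    have t2: "\<tau> (cb a b) \<noteq> \<tau> (cb (2*a) (2*b))" using tinj cbM ne by blast
    have z: "0 \<in> lin (\<tau> (cb a b)) (\<tau> (cb (2*a) (2*b)))" using dep_zero_in[OF t1 t2 nd] .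
    have e1: "lin 0 (\<tau> (cb a b)) = lin (\<tau> (cb a b)) (\<tau> (cb (2*a) (2*b)))"
      by (rule lin_eq[OF z lin_left]) (use t1 in auto)
    have e2: "lin 0 (\<tau> (cb a b)) = Lam" unfolding Lam_def by (rule lin_eq[OF zLam[unfolded Lam_def] PAL[OF inL[OF ab], unfolded Lam_def]]) (use t1 in auto)
    have "\<tau> (cb (2*a) (2*b)) \<in> Lam" using e1 e2 lin_right by blast
    then have "cb (2*a) (2*b) \<in> L" using bkL cbM t1 by blast
    then have "2*a + 2*b = 1" by (rule inLD)
    then show False using ab by simp
  qed
  have NUs: "\<tau> (cb (s*a) (s*b)) \<in> lin (\<tau> (cb a b)) (\<tau> (cb (2*a) (2*b)))" if ab: "a + b = 1" "s \<noteq> 0" for a b s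
  proof -
    have ab0: "a \<noteq> 0 \<or> b \<noteq> 0" using ab by auto
    have ne: "cb a b \<noteq> cb (2*a) (2*b)" by (rule cb_ne) (use ab0 in auto)
    have "cb (s*a) (s*b) = cb (a + (s-1)*(2*a - a)) (b + (s-1)*(2*b-b))" by (simp add: algebra_simps)
    then have l: "cb (s*a) (s*b) \<in> lin (cb a b) (cb (2*a) (2*b))" using cb_lin by metis
    show ?thesis by (rule COL[OF cbM cbM _ _ ne l]) (use cbnz ab0 ab(2) in auto)
  qed
  have NUb: "\<exists>s. w = cb (s*a) (s*b)" if ab: "a + b = 1" and w: "w \<in> Mset" "\<tau> w \<in> lin (\<tau> (cb a b)) (\<tau> (cb (2*a) (2*b)))" for a b w
  proof -
    have g: "lin_indep2 (\<tau> (cb a b)) (\<tau> (cb (2*a) (2*b)))" using NU[OF ab] .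
    have ab0: "a \<noteq> 0 \<or> b \<noteq> 0" using ab by auto
    have ne: "cb a b \<noteq> cb (2*a) (2*b)" by (rule cb_ne) (use ab0 in auto)
    have "\<tau> w \<noteq> 0" using indep_zero_notin[OF g] w(2) by auto
    then have "w \<in> lin (cb a b) (cb (2*a) (2*b))"
      using pullback2[OF cbM cbM indep_nz1[OF g] indep_nz2[OF g] ne w] by blast
    then obtain t where "w = cb (a + t*(2*a-a)) (b + t*(2*b-b))" using cb_linD by blast
    then have "w = cb ((1+t)*a) ((1+t)*b)" by (simp add: algebra_simps)
    then show ?thesis by blast
  qed
  define d where "d = cb (-1) 1"
  define p where "p = cb (-1) 2"
  have dL: "d \<notin> L"
  proof
    assume "d \<in> L" then have "-1 + 1 = (1::rat)" using inLD unfolding d_def by blast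
    then show False by simp
  qed
  have d0: "d \<noteq> 0" unfolding d_def by (rule cbnz) simp
  have pL: "p \<in> L" unfolding p_def by (rule inL) simp
  have yL: "cb 0 1 \<in> L" by (rule inL) simp
  have xL: "cb 1 0 \<in> L" by (rule inL) simp
  have dis1: "lin (\<tau> (cb 1 0)) (\<tau> (cb (2*1) (2*0))) \<inter> lin (\<tau> d) (\<tau> (cb 0 1)) = {}"
  proof (rule ccontr)
    assume "\<not> ?thesis"
    then obtain z where z: "z \<in> lin (\<tau> (cb 1 0)) (\<tau> (cb (2*1) (2*0)))" "z \<in> lin (\<tau> d) (\<tau> (cb 0 1))" by blast
    have zM: "z \<in> Mset" using lin_Mset[OF tM tM z(2)] cbM unfolding d_def by blast
    obtain w where w: "w \<in> Mset" "z = \<tau> w" using tsurj[OF zM] by blast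
    obtain s where s: "w = cb (s*1) (s*0)" using NUb[of 1 0 w] w z by auto
    have "w \<in> lin d (cb 0 1)" using backk[OF yL _ dL d0 w(1)] z w cbM unfolding d_def by blast
    then obtain t where "w = cb (-1 + t*(0 - -1)) (1 + t*(1-1))" unfolding d_def using cb_linD by blast
    then have "cb (s*1) (s*0) = cb (-1 + t*(0 - -1)) (1 + t*(1-1))" using s by simp
    then have "s*0 = 1 + t*(1-1)" using cb_eq by blast
    then show False by simp
  qed
  have dis2: "lin (\<tau> (cb 0 1)) (\<tau> (cb (2*0) (2*1))) \<inter> lin (\<tau> d) (\<tau> p) = {}"
  proof (rule ccontr)
    assume "\<not> ?thesis"
    then obtain z where z: "z \<in> lin (\<tau> (cb 0 1)) (\<tau> (cb (2*0) (2*1)))" "z \<in> lin (\<tau> d) (\<tau> p)" by blast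
    have zM: "z \<in> Mset" using lin_Mset[OF tM tM z(2)] cbM unfolding d_def p_def by blast
    obtain w where w: "w \<in> Mset" "z = \<tau> w" using tsurj[OF zM] by blast
    obtain s where s: "w = cb (s*0) (s*1)" using NUb[of 0 1 w] w z by auto
    have "w \<in> lin d p" using backk[OF pL _ dL d0 w(1)] z w cbM unfolding d_def by blast
    then obtain t where "w = cb (-1 + t*(-1 - -1)) (1 + t*(2-1))" unfolding d_def p_def using cb_linD by blast
    then have "cb (s*0) (s*1) = cb (-1 + t*(-1 - -1)) (1 + t*(2-1))" using s by simp
    then have "s*0 = -1 + t*(-1 - -1)" using cb_eq by blast
    then show False by simp
  qed
  have dis3: "lin (\<tau> (cb 1 0)) (\<tau> (cb (2*1) (2*0))) \<inter> lin (\<tau> (cb 0 1)) (\<tau> (cb (2*0) (2*1))) = {}"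
  proof (rule ccontr)
    assume "\<not> ?thesis"
    then obtain z where z: "z \<in> lin (\<tau> (cb 1 0)) (\<tau> (cb (2*1) (2*0)))" "z \<in> lin (\<tau> (cb 0 1)) (\<tau> (cb (2*0) (2*1)))" by blast
    have zM: "z \<in> Mset" using lin_Mset[OF tM tM z(2)] cbM by blast
    obtain w where w: "w \<in> Mset" "z = \<tau> w" using tsurj[OF zM] by blast
    obtain s where s: "w = cb (s*1) (s*0)" using NUb[of 1 0 w] w z by auto
    obtain s' where s': "w = cb (s'*0) (s'*1)" using NUb[of 0 1 w] w z by auto
    have "cb (s*1) (s*0) = cb (s'*0) (s'*1)" using s s' by simp
    then have "s*1 = s'*0" using cb_eq by blast
    then have "s = 0" by simp
    then have "w = 0" using s cb0 by simp
    then have "z = 0" using w t0 by simp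
    moreover have "0 \<notin> lin (\<tau> (cb 1 0)) (\<tau> (cb (2*1) (2*0)))" using indep_zero_notin[OF NU[of 1 0]] by simp
    ultimately show False using z by simp
  qed
  define \<Sigma> where "\<Sigma> = pl (\<tau> (cb 1 0)) (\<tau> (cb 0 1)) (\<tau> (cb 2 0))"
  have LS: "z \<in> \<Sigma>" if "z \<in> Lam" for z using lin_in_pl that unfolding \<Sigma>_def Lam_def by blast
  have x\<Sigma>: "\<tau> (cb 1 0) \<in> \<Sigma>" "\<tau> (cb 0 1) \<in> \<Sigma>" "\<tau> (cb 2 0) \<in> \<Sigma>" unfolding \<Sigma>_def using pl_A pl_B pl_D by auto
  have nux\<Sigma>: "z \<in> \<Sigma>" if "z \<in> lin (\<tau> (cb 1 0)) (\<tau> (cb 2 0))" for z using lin_in_pl2 that unfolding \<Sigma>_def by blast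
  have d\<Sigma>: "\<tau> d \<in> \<Sigma>"
  proof -
    have i: "lin_indep2 (cb 2 0) d" unfolding cb_def d_def by (rule indep_combo[OF xy(3)]) simp
    have s0: "cb (1/2) (1/2) \<in> lin (cb 2 0) d" using cb_lin[of 2 "1/2" "-1" 0 1] unfolding d_def by simp
    have "\<tau> (cb (1/2) (1/2)) \<in> lin (\<tau> (cb 2 0)) (\<tau> d)"
      using PA[OF cbM _ i lin_left lin_right s0 indep_neq[OF i]] cbM unfolding d_def by blast
    moreover have "\<tau> (cb (1/2) (1/2)) \<noteq> \<tau> (cb 2 0)" by (rule tcb_ne) simp
    ultimately have "\<tau> d \<in> lin (\<tau> (cb 2 0)) (\<tau> (cb (1/2) (1/2)))" using lin_swap3 by blast
    moreover have "\<tau> (cb (1/2) (1/2)) \<in> \<Sigma>" by (rule LS[OF PAL[OF inL]]) simp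
    ultimately show ?thesis using pl_lin x\<Sigma>(3) unfolding \<Sigma>_def by blast
  qed
  have p\<Sigma>: "\<tau> p \<in> \<Sigma>" by (rule LS[OF PAL[OF pL]])
  have y2\<Sigma>: "\<tau> (cb 0 2) \<in> \<Sigma>"
  proof -
    have i: "lin_indep2 (cb 2 0) (cb 0 3)" unfolding cb_def by (rule indep_combo[OF xy(3)]) simp
    have u: "cb 4 (-3) \<in> lin (cb 2 0) (cb 0 3)" using cb_lin[of 2 "-1" 0 0 3] by simp
    have "\<tau> (cb 4 (-3)) \<in> lin (\<tau> (cb 2 0)) (\<tau> (cb 0 3))"
      using PA[OF cbM cbM i lin_left lin_right u indep_neq[OF i]] .
    moreover have "\<tau> (cb 4 (-3)) \<noteq> \<tau> (cb 2 0)" by (rule tcb_ne) simp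
    ultimately have "\<tau> (cb 0 3) \<in> lin (\<tau> (cb 2 0)) (\<tau> (cb 4 (-3)))" using lin_swap3 by blast
    moreover have "\<tau> (cb 4 (-3)) \<in> \<Sigma>" by (rule LS[OF PAL[OF inL]]) simp
    ultimately have y3: "\<tau> (cb 0 3) \<in> \<Sigma>" using pl_lin x\<Sigma>(3) unfolding \<Sigma>_def by blast
    have n3: "\<tau> (cb (3*0) (3*1)) \<in> lin (\<tau> (cb 0 1)) (\<tau> (cb (2*0) (2*1)))" by (rule NUs) simp_all
    have ne: "\<tau> (cb 0 1) \<noteq> \<tau> (cb 0 3)" by (rule tcb_ne) simp
    have "lin (\<tau> (cb 0 1)) (\<tau> (cb 0 3)) = lin (\<tau> (cb 0 1)) (\<tau> (cb (2*0) (2*1)))"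
      by (rule lin_eq) (use n3 ne in auto)
    then have "\<tau> (cb 0 2) \<in> lin (\<tau> (cb 0 1)) (\<tau> (cb 0 3))" using lin_right[of "\<tau> (cb 0 1)" "\<tau> (cb 0 2)"] by simp
    then show ?thesis using pl_lin[OF x\<Sigma>(2)[unfolded \<Sigma>_def] y3[unfolded \<Sigma>_def]] unfolding \<Sigma>_def by blast
  qed
  have ne20: "\<tau> (cb 1 0) \<noteq> \<tau> (cb 2 0)" by (rule tcb_ne) simp
  have ne02: "\<tau> (cb 0 1) \<noteq> \<tau> (cb 0 2)" by (rule tcb_ne) simp
  note X = x\<Sigma>[unfolded \<Sigma>_def] and DS = d\<Sigma>[unfolded \<Sigma>_def] and PS = p\<Sigma>[unfolded \<Sigma>_def]
    and YS = y2\<Sigma>[unfolded \<Sigma>_def]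
  obtain k1 where k1: "\<tau> (cb 0 1) - \<tau> d = smul k1 (\<tau> (cb 2 0) - \<tau> (cb 1 0))"
    using PAR[OF X(1) X(3) DS X(2) ne20] dis1 by auto
  obtain k2 where k2: "\<tau> (cb 0 2) - \<tau> (cb 0 1) = smul k2 (\<tau> (cb 2 0) - \<tau> (cb 1 0))"
    using PAR[OF X(1) X(3) X(2) YS ne20] dis3 by auto
  obtain k3 where k3: "\<tau> p - \<tau> d = smul k3 (\<tau> (cb 0 2) - \<tau> (cb 0 1))"
    using PAR[OF X(2) YS DS PS ne02] dis2 by auto
  have k1nz: "k1 \<noteq> 0"
  proof
    assume "k1 = 0" then have "\<tau> (cb 0 1) = \<tau> d" using k1 by (simp add: fun_eq_iff)
    then have "cb 0 1 = d" using tinj cbM unfolding d_def by blast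
    then show False unfolding d_def using cb_ne[of 0 "-1" 1 1] by simp
  qed
  have "\<tau> p = \<tau> d + smul (k3*k2/k1) (\<tau> (cb 0 1) - \<tau> d)"
  proof -
    have "\<tau> p i = \<tau> d i + (k3*k2/k1) * (\<tau> (cb 0 1) i - \<tau> d i)" for i
    proof -
      have a: "\<tau> (cb 0 1) i - \<tau> d i = k1 * (\<tau> (cb 2 0) i - \<tau> (cb 1 0) i)" using fun_cong[OF k1, of i] by simp
      have b: "\<tau> (cb 0 2) i - \<tau> (cb 0 1) i = k2 * (\<tau> (cb 2 0) i - \<tau> (cb 1 0) i)" using fun_cong[OF k2, of i] by simp
      have c: "\<tau> p i - \<tau> d i = k3 * (\<tau> (cb 0 2) i - \<tau> (cb 0 1) i)" using fun_cong[OF k3, of i] by simp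
      have c': "\<tau> p i - \<tau> d i = k3 * (k2 * (\<tau> (cb 2 0) i - \<tau> (cb 1 0) i))" using c b by simp
      have e: "(k3*k2/k1) * (\<tau> (cb 0 1) i - \<tau> d i) = k3 * (k2 * (\<tau> (cb 2 0) i - \<tau> (cb 1 0) i))"
        unfolding a using k1nz by (simp add: field_simps)
      show ?thesis using c' e by linarith
    qed
    then show ?thesis by (simp add: fun_eq_iff)
  qed
  then have "\<tau> p \<in> lin (\<tau> d) (\<tau> (cb 0 1))" unfolding lin_def by blast
  then have "p \<in> lin d (cb 0 1)" using backk[OF yL _ dL d0] cbM unfolding p_def d_def by blast
  then obtain t where "p = cb (-1 + t*(0 - -1)) (1 + t*(1-1))" unfolding d_def using cb_linD by blast
  then have "cb (-1) 2 = cb (-1 + t*(0 - -1)) (1 + t*(1-1))" unfolding p_def by simp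
  then have "(2::rat) = 1 + t*(1-1)" using cb_eq by blast
  then show False by simp
qed

lemma LX:
  assumes xy: "x \<in> Mset" "y \<in> Mset" "lin_indep2 x y" and o: "\<iota> 0 \<notin> lin x y"
  shows "lin_indep2 (\<tau> x) (\<tau> y)"
proof (rule ccontr)
  assume dep: "\<not> ?thesis"
  show False
  proof (cases "\<iota> 0 = 0")
    case True then show False using LX0[OF xy _ dep] t0_iff by blast
  next
    case False then show False using LX1[OF xy False o dep] by blast
  qed
qed

end

lemma PG:
  assumes d1: "lin A B \<inter> lin C D = {}" and d2: "lin B C \<inter> lin D A = {}"
    and P: "P \<in> lin A C" "P \<in> lin B D"
  shows "D = A - B + C"
proof -
  obtain s where s: "P = A + smul s (C - A)" using P(1) by (auto simp: lin_def)
  obtain t where t: "P = B + smul t (D - B)" using P(2) by (auto simp: lin_def)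
  have E: "A i + s * (C i - A i) = B i + t * (D i - B i)" for i
  proof -
    have "A + smul s (C - A) = B + smul t (D - B)" using s t by simp
    from fun_cong[OF this, of i] show ?thesis by simp
  qed
  have t0: "t \<noteq> 0"
  proof
    assume t0: "t = 0"
    then have BP: "B = P" using t by simp
    then have Bl: "B \<in> lin A C" using P(1) by simp
    show False
    proof (cases "B = C")
      case True
      then have "C \<in> lin A B \<inter> lin C D" by simp
      then show False using d1 by simp
    next
      case False
      have "lin B C = lin A C" by (rule lin_eq[OF Bl lin_right False])
      then have "A \<in> lin B C \<inter> lin D A" by simp
      then show False using d2 by simp
    qed
  qed
  define \<alpha> where "\<alpha> = -(1-t)/t"
  define \<beta> where "\<beta> = s/t"
  have Di: "D i = A i + \<alpha> * (B i - A i) + \<beta> * (C i - A i)" for i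
  proof -
    have h: "t * D i = A i + s*(C i - A i) - B i + t * B i" using E[of i] by (simp add: algebra_simps)
    have h2: "t * (A i + \<alpha> * (B i - A i) + \<beta> * (C i - A i)) = A i + s*(C i - A i) - B i + t * B i"
      unfolding \<alpha>_def \<beta>_def using t0 by (simp add: field_simps)
    show ?thesis using h h2 t0 by (metis mult_left_cancel)
  qed
  have b1: "\<beta> = 1"
  proof (rule ccontr)
    assume b: "\<beta> \<noteq> 1"
    define b where "b = -1/(\<beta> - 1)"
    define Q where "Q = A + smul (b*\<alpha>) (B - A)"
    have "Q \<in> lin A B" unfolding Q_def lin_def by blast
    moreover have "Q = C + smul b (D - C)"
    proof -
      have "Q i = C i + b * (D i - C i)" for i
      proof -
        have "1 + b*(\<beta> - 1) = 0" unfolding b_def using b by simp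
        have "C i + b * (D i - C i) = A i + b*\<alpha>*(B i - A i) + (1 + b*(\<beta> - 1)) * (C i - A i)"
          unfolding Di by (simp add: algebra_simps)
        then show ?thesis unfolding Q_def using \<open>1 + b*(\<beta> - 1) = 0\<close> by simp
      qed
      then show ?thesis by (simp add: fun_eq_iff)
    qed
    then have "Q \<in> lin C D" unfolding lin_def by blast
    ultimately show False using d1 by blast
  qed
  have a1: "\<alpha> = -1"
  proof (rule ccontr)
    assume a: "\<alpha> \<noteq> -1"
    define b where "b = 1/(\<alpha> + 1)"
    have ab: "b * (\<alpha> + 1) = 1" unfolding b_def using a by (simp add: field_simps)
    define Q where "Q = D + smul (1 - b) (A - D)"
    have "Q \<in> lin D A" unfolding Q_def lin_def by blast
    moreover have "Q = B + smul b (C - B)"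
    proof -
      have "Q i = B i + b * (C i - B i)" for i
      proof -
        have DA: "D i - A i = \<alpha> * (B i - A i) + \<beta> * (C i - A i)" using Di[of i] by simp
        have "Q i = A i + b * (D i - A i)" unfolding Q_def by (simp add: algebra_simps)
        also have "\<dots> = A i + b * (\<alpha> * (B i - A i) + \<beta> * (C i - A i))" unfolding DA ..
        finally have "Q i = A i + b * (\<alpha> * (B i - A i) + \<beta> * (C i - A i))" .
        also have "\<dots> = A i + b*\<alpha>*(B i - A i) + b * (C i - A i)" using b1 by (simp add: algebra_simps)
        also have "\<dots> = B i + b * (C i - B i) + (b * (\<alpha> + 1) - 1) * (B i - A i)" by (simp add: algebra_simps)
        also have "\<dots> = B i + b * (C i - B i)" using ab by simp
        finally show ?thesis .
      qed
      then show ?thesis by (simp add: fun_eq_iff)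
    qed
    then have "Q \<in> lin B C" unfolding lin_def by blast
    ultimately show False using d2 by blast
  qed
  show ?thesis using Di a1 b1 by (simp add: fun_eq_iff algebra_simps)
qed

lemma ic: "P c = 0 \<Longrightarrow> Q c = 1 \<Longrightarrow> P \<noteq> 0 \<Longrightarrow> lin_indep2 P Q"
  by (rule indep_coord) auto
lemma ics: "Q c = 0 \<Longrightarrow> P c = 1 \<Longrightarrow> Q \<noteq> 0 \<Longrightarrow> lin_indep2 P Q"
  by (rule indep_sym, rule indep_coord) auto
lemma nzc: "P c \<noteq> 0 \<Longrightarrow> P \<noteq> 0" by auto
lemma nec: "A c \<noteq> B c \<Longrightarrow> A \<noteq> B" by auto
lemma av: "Oo c = 0 \<Longrightarrow> P c = 0 \<Longrightarrow> Q c = 1 \<Longrightarrow> Oo \<noteq> P \<Longrightarrow> Oo \<notin> lin P Q"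
proof
  assume h: "Oo c = 0" "P c = 0" "Q c = 1" "Oo \<noteq> P" and "Oo \<in> lin P Q"
  then obtain t where t: "Oo = P + smul t (Q - P)" by (auto simp: lin_def)
  then have "Oo c = P c + t * (Q c - P c)" by simp
  then have "t = 0" using h by simp
  then show False using t h by simp
qed
lemma avs: "Oo c = 0 \<Longrightarrow> Q c = 0 \<Longrightarrow> P c = 1 \<Longrightarrow> Oo \<noteq> Q \<Longrightarrow> Oo \<notin> lin P Q"
  using av[of Oo c Q P] lin_sym by metis
lemma ncl: "X c \<noteq> P c \<Longrightarrow> P c = Q c \<Longrightarrow> X \<notin> lin P Q"
proof
  assume h: "X c \<noteq> P c" "P c = Q c" and "X \<in> lin P Q"
  then obtain t where t: "X = P + smul t (Q - P)" by (auto simp: lin_def)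
  then have "X c = P c + t * (Q c - P c)" by simp
  then show False using h by simp
qed

context S
begin

lemma onto:
  assumes "P1 \<in> Mset" "P2 \<in> Mset" "lin_indep2 P1 P2" "\<iota> 0 \<notin> lin P1 P2" "z \<in> lin (\<tau> P1) (\<tau> P2)"
  shows "\<exists>w\<in>lin P1 P2. z = \<tau> w"
proof -
  have g: "lin_indep2 (\<tau> P1) (\<tau> P2)" using LX assms by blast
  have "z \<noteq> 0" using indep_zero_notin[OF g] assms(5) by auto
  then show ?thesis using pullback[OF assms(1,2) indep_nz1[OF g] indep_nz2[OF g] indep_neq[OF assms(3)] assms(5)] by blast
qed

lemma img_disj:
  assumes "P1 \<in> Mset" "P2 \<in> Mset" "lin_indep2 P1 P2" "\<iota> 0 \<notin> lin P1 P2"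
    and "P3 \<in> Mset" "P4 \<in> Mset" "lin_indep2 P3 P4" "\<iota> 0 \<notin> lin P3 P4"
    and "lin P1 P2 \<inter> lin P3 P4 = {}"
  shows "lin (\<tau> P1) (\<tau> P2) \<inter> lin (\<tau> P3) (\<tau> P4) = {}"
proof (rule ccontr)
  assume "\<not> ?thesis"
  then obtain z where z: "z \<in> lin (\<tau> P1) (\<tau> P2)" "z \<in> lin (\<tau> P3) (\<tau> P4)" by blast
  obtain w1 where w1: "w1 \<in> lin P1 P2" "z = \<tau> w1" using onto[OF assms(1-4) z(1)] by blast
  obtain w2 where w2: "w2 \<in> lin P3 P4" "z = \<tau> w2" using onto[OF assms(5-8) z(2)] by blast
  have "w1 = w2" using tinj[OF lin_Mset[OF assms(1,2) w1(1)] lin_Mset[OF assms(5,6) w2(1)]] w1 w2 by simp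
  then show False using w1 w2 assms(9) by blast
qed

lemma GL:
  assumes M: "X \<in> Mset" "Y \<in> Mset" "Z \<in> Mset" and W: "W = X - Y + Z"
    and ind: "lin_indep2 X Y" "lin_indep2 Y Z" "lin_indep2 Z W" "lin_indep2 W X" "lin_indep2 X Z" "lin_indep2 Y W"
    and oo: "\<iota> 0 \<notin> lin X Y" "\<iota> 0 \<notin> lin Y Z" "\<iota> 0 \<notin> lin Z W" "\<iota> 0 \<notin> lin W X"
    and nc: "Z \<notin> lin X Y" "X \<notin> lin Y Z"
  shows "\<tau> W = \<tau> X - \<tau> Y + \<tau> Z"
proof -
  have WM: "W \<in> Mset" using M W by auto
  have dd1: "lin X Y \<inter> lin Z W = {}"
  proof (rule ccontr)
    assume "\<not> ?thesis"
    then obtain v where v: "v \<in> lin X Y" "v \<in> lin Z W" by blast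
    obtain a where a: "v = X + smul a (Y - X)" using v(1) by (auto simp: lin_def)
    obtain b where b: "v = Z + smul b (W - Z)" using v(2) by (auto simp: lin_def)
    have "Z i = X i + (a + b) * (Y i - X i)" for i
    proof -
      have "(X + smul a (Y - X)) i = (Z + smul b (W - Z)) i" using a b by simp
      then show ?thesis unfolding W by (simp add: algebra_simps)
    qed
    then have "Z = X + smul (a + b) (Y - X)" by (simp add: fun_eq_iff)
    then show False using nc(1) unfolding lin_def by blast
  qed
  have dd2: "lin Y Z \<inter> lin W X = {}"
  proof (rule ccontr)
    assume "\<not> ?thesis"
    then obtain v where v: "v \<in> lin Y Z" "v \<in> lin W X" by blast
    obtain a where a: "v = Y + smul a (Z - Y)" using v(1) by (auto simp: lin_def)
    obtain b where b: "v = W + smul b (X - W)" using v(2) by (auto simp: lin_def)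
    have "X i = Y i + (a + b - 1) * (Z i - Y i)" for i
    proof -
      have "(Y + smul a (Z - Y)) i = (W + smul b (X - W)) i" using a b by simp
      then show ?thesis unfolding W by (simp add: algebra_simps)
    qed
    then have "X = Y + smul (a + b - 1) (Z - Y)" by (simp add: fun_eq_iff)
    then show False using nc(2) unfolding lin_def by blast
  qed
  have i1: "lin (\<tau> X) (\<tau> Y) \<inter> lin (\<tau> Z) (\<tau> W) = {}"
    by (rule img_disj[OF M(1,2) ind(1) oo(1) M(3) WM ind(3) oo(3) dd1])
  have i2: "lin (\<tau> Y) (\<tau> Z) \<inter> lin (\<tau> W) (\<tau> X) = {}"
    by (rule img_disj[OF M(2,3) ind(2) oo(2) WM M(1) ind(4) oo(4) dd2])
  define m where "m = X + smul (1/2) (Z - X)"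
  have m1: "m \<in> lin X Z" unfolding m_def lin_def by blast
  have "m = Y + smul (1/2) (W - Y)" unfolding m_def W by (simp add: fun_eq_iff field_simps)
  then have m2: "m \<in> lin Y W" unfolding lin_def by blast
  have p1: "\<tau> m \<in> lin (\<tau> X) (\<tau> Z)" by (rule PA[OF M(1,3) ind(5) lin_left lin_right m1 indep_neq[OF ind(5)]])
  have p2: "\<tau> m \<in> lin (\<tau> Y) (\<tau> W)" by (rule PA[OF M(2) WM ind(6) lin_left lin_right m2 indep_neq[OF ind(6)]])
  show ?thesis by (rule PG[OF i1 i2 p1 p2])
qed

lemma LAW:
  assumes M: "x \<in> Mset" "y \<in> Mset" "z \<in> Mset"
    and nz: "x \<noteq> 0" "y \<noteq> 0" "z \<noteq> 0" "x - y + z \<noteq> 0"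
    and no: "x \<noteq> \<iota> 0" "y \<noteq> \<iota> 0" "z \<noteq> \<iota> 0" "x - y + z \<noteq> \<iota> 0"
  shows "\<tau> (x - y + z) = \<tau> x - \<tau> y + \<tau> z"
proof -
  define w where "w = x - y + z"
  define oo where "oo = \<iota> 0"
  have oM: "oo \<in> Mset" unfolding oo_def by simp
  have fin: "finite ({i. x i \<noteq> 0} \<union> {i. y i \<noteq> 0} \<union> {i. z i \<noteq> 0} \<union> {i. oo i \<noteq> 0})"
    using supp_fin M oM by auto
  obtain k where k: "k \<notin> {i. x i \<noteq> 0} \<union> {i. y i \<noteq> 0} \<union> {i. z i \<noteq> 0} \<union> {i. oo i \<noteq> 0}"
    using fresh[OF fin] by blast
  obtain j where j: "j \<notin> {i. x i \<noteq> 0} \<union> {i. y i \<noteq> 0} \<union> {i. z i \<noteq> 0} \<union> {i. oo i \<noteq> 0} \<union> {k}"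
    using fresh[of "{i. x i \<noteq> 0} \<union> {i. y i \<noteq> 0} \<union> {i. z i \<noteq> 0} \<union> {i. oo i \<noteq> 0} \<union> {k}"] fin by blast
  have c: "x k = 0" "y k = 0" "z k = 0" "oo k = 0" "x j = 0" "y j = 0" "z j = 0" "oo j = 0" "j \<noteq> k"
    using k j by auto
  have wc: "w k = 0" "w j = 0" unfolding w_def using c by auto
  define f where "f = dl k"
  define g where "g = dl j"
  have fc: "f k = 1" "f j = 0" "g j = 1" "g k = 0" unfolding f_def g_def using c(9) by auto
  have wM: "w \<in> Mset" unfolding w_def using M by auto
  have fM: "f \<in> Mset" "g \<in> Mset" unfolding f_def g_def by auto
  note cs = c wc fc
  have wnz: "w \<noteq> 0" "w \<noteq> oo" using nz(4) no(4) unfolding w_def oo_def by auto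
  have xo: "x \<noteq> oo" "y \<noteq> oo" "z \<noteq> oo" using no unfolding oo_def by auto
  have G1: "\<tau> (w + g) = \<tau> x - \<tau> (y + f) + \<tau> (z + f + g)"
  proof (rule GL[of x "y + f" "z + f + g" "w + g", folded oo_def])
    show "x \<in> Mset" "y + f \<in> Mset" "z + f + g \<in> Mset" using M fM by auto
    show "w + g = x - (y + f) + (z + f + g)" unfolding w_def by (simp add: fun_eq_iff algebra_simps)
    show "lin_indep2 x (y + f)" by (rule ic[of _ k]) (use cs nz in auto)
    show "lin_indep2 (y + f) (z + f + g)" by (rule ic[of _ j]) (use cs nzc[of "y+f" k] in auto)
    show "lin_indep2 (z + f + g) (w + g)" by (rule ics[of _ k]) (use cs nzc[of "w+g" j] in auto)
    show "lin_indep2 (w + g) x" by (rule ics[of _ j]) (use cs nz in auto)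
    show "lin_indep2 x (z + f + g)" by (rule ic[of _ k]) (use cs nz in auto)
    show "lin_indep2 (y + f) (w + g)" by (rule ic[of _ j]) (use cs nzc[of "y+f" k] in auto)
    show "oo \<notin> lin x (y + f)" by (rule av[of _ k]) (use cs xo in auto)
    show "oo \<notin> lin (y + f) (z + f + g)" by (rule av[of _ j]) (use cs nec[of oo k "y+f"] in auto)
    show "oo \<notin> lin (z + f + g) (w + g)" by (rule avs[of _ k]) (use cs nec[of oo j "w+g"] in auto)
    show "oo \<notin> lin (w + g) x" by (rule avs[of _ j]) (use cs xo in auto)
    show "z + f + g \<notin> lin x (y + f)" by (rule ncl[of _ j]) (use cs in auto)
    show "x \<notin> lin (y + f) (z + f + g)" by (rule ncl[of _ k]) (use cs in auto)
  qed
  have G2: "\<tau> w = \<tau> (w + g) - \<tau> (z + f + g) + \<tau> (z + f)"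
  proof (rule GL[of "w + g" "z + f + g" "z + f" w, folded oo_def])
    show "w + g \<in> Mset" "z + f + g \<in> Mset" "z + f \<in> Mset" using M fM wM by auto
    show "w = w + g - (z + f + g) + (z + f)" by (simp add: fun_eq_iff algebra_simps)
    show "lin_indep2 (w + g) (z + f + g)" by (rule ic[of _ k]) (use cs nzc[of "w+g" j] in auto)
    show "lin_indep2 (z + f + g) (z + f)" by (rule ics[of _ j]) (use cs nzc[of "z+f" k] in auto)
    show "lin_indep2 (z + f) w" by (rule ics[of _ k]) (use cs wnz in auto)
    show "lin_indep2 w (w + g)" by (rule ic[of _ j]) (use cs wnz in auto)
    show "lin_indep2 (w + g) (z + f)" by (rule ic[of _ k]) (use cs nzc[of "w+g" j] in auto)
    show "lin_indep2 (z + f + g) w" by (rule ics[of _ k]) (use cs wnz in auto)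
    show "oo \<notin> lin (w + g) (z + f + g)" by (rule av[of _ k]) (use cs nec[of oo j "w+g"] in auto)
    show "oo \<notin> lin (z + f + g) (z + f)" by (rule avs[of _ j]) (use cs nec[of oo k "z+f"] in auto)
    show "oo \<notin> lin (z + f) w" by (rule avs[of _ k]) (use cs wnz in auto)
    show "oo \<notin> lin w (w + g)" by (rule av[of _ j]) (use cs wnz in auto)
    show "z + f \<notin> lin (w + g) (z + f + g)" by (rule ncl[of _ j]) (use cs in auto)
    show "w + g \<notin> lin (z + f + g) (z + f)" by (rule ncl[of _ k]) (use cs in auto)
  qed
  have G3: "\<tau> (z + f + g) = \<tau> (y + f) - \<tau> y + \<tau> (z + g)"
  proof (rule GL[of "y + f" y "z + g" "z + f + g", folded oo_def])
    show "y + f \<in> Mset" "y \<in> Mset" "z + g \<in> Mset" using M fM by auto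
    show "z + f + g = y + f - y + (z + g)" by (simp add: fun_eq_iff algebra_simps)
    show "lin_indep2 (y + f) y" by (rule ics[of _ k]) (use cs nz in auto)
    show "lin_indep2 y (z + g)" by (rule ic[of _ j]) (use cs nz in auto)
    show "lin_indep2 (z + g) (z + f + g)" by (rule ic[of _ k]) (use cs nzc[of "z+g" j] in auto)
    show "lin_indep2 (z + f + g) (y + f)" by (rule ics[of _ j]) (use cs nzc[of "y+f" k] in auto)
    show "lin_indep2 (y + f) (z + g)" by (rule ics[of _ k]) (use cs nzc[of "z+g" j] in auto)
    show "lin_indep2 y (z + f + g)" by (rule ic[of _ k]) (use cs nz in auto)
    show "oo \<notin> lin (y + f) y" by (rule avs[of _ k]) (use cs xo in auto)
    show "oo \<notin> lin y (z + g)" by (rule av[of _ j]) (use cs xo in auto)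
    show "oo \<notin> lin (z + g) (z + f + g)" by (rule av[of _ k]) (use cs nec[of oo j "z+g"] in auto)
    show "oo \<notin> lin (z + f + g) (y + f)" by (rule avs[of _ j]) (use cs nec[of oo k "y+f"] in auto)
    show "z + g \<notin> lin (y + f) y" by (rule ncl[of _ j]) (use cs in auto)
    show "y + f \<notin> lin y (z + g)" by (rule ncl[of _ k]) (use cs in auto)
  qed
  have G4: "\<tau> (z + f) = \<tau> (z + f + g) - \<tau> (z + g) + \<tau> z"
  proof (rule GL[of "z + f + g" "z + g" z "z + f", folded oo_def])
    show "z + f + g \<in> Mset" "z + g \<in> Mset" "z \<in> Mset" using M fM by auto
    show "z + f = z + f + g - (z + g) + z" by (simp add: fun_eq_iff algebra_simps)
    show "lin_indep2 (z + f + g) (z + g)" by (rule ics[of _ k]) (use cs nzc[of "z+g" j] in auto)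
    show "lin_indep2 (z + g) z" by (rule ics[of _ j]) (use cs nz in auto)
    show "lin_indep2 z (z + f)" by (rule ic[of _ k]) (use cs nz in auto)
    show "lin_indep2 (z + f) (z + f + g)" by (rule ic[of _ j]) (use cs nzc[of "z+f" k] in auto)
    show "lin_indep2 (z + f + g) z" by (rule ics[of _ k]) (use cs nz in auto)
    show "lin_indep2 (z + g) (z + f)" by (rule ic[of _ k]) (use cs nzc[of "z+g" j] in auto)
    show "oo \<notin> lin (z + f + g) (z + g)" by (rule avs[of _ k]) (use cs nec[of oo j "z+g"] in auto)
    show "oo \<notin> lin (z + g) z" by (rule avs[of _ j]) (use cs xo in auto)
    show "oo \<notin> lin z (z + f)" by (rule av[of _ k]) (use cs xo in auto)
    show "oo \<notin> lin (z + f) (z + f + g)" by (rule av[of _ j]) (use cs nec[of oo k "z+f"] in auto)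
    show "z \<notin> lin (z + f + g) (z + g)" by (rule ncl[of _ j]) (use cs in auto)
    show "z + f + g \<notin> lin (z + g) z" by (rule ncl[of _ k]) (use cs in auto)
  qed
  have "\<tau> w i = \<tau> x i - \<tau> y i + \<tau> z i" for i
  proof -
    have a: "\<tau> (w+g) i = \<tau> x i - \<tau> (y+f) i + \<tau> (z+f+g) i" using fun_cong[OF G1, of i] by (simp only: plus_fun_apply minus_apply)
    have b: "\<tau> w i = \<tau> (w + g) i - \<tau> (z + f + g) i + \<tau> (z + f) i" using fun_cong[OF G2, of i] by (simp only: plus_fun_apply minus_apply)
    have c: "\<tau> (z + f + g) i = \<tau> (y + f) i - \<tau> y i + \<tau> (z + g) i" using fun_cong[OF G3, of i] by (simp only: plus_fun_apply minus_apply)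
    have d: "\<tau> (z + f) i = \<tau> (z + f + g) i - \<tau> (z + g) i + \<tau> z i" using fun_cong[OF G4, of i] by (simp only: plus_fun_apply minus_apply)
    show ?thesis using a b c d by linarith
  qed
  then have "\<tau> w = \<tau> x - \<tau> y + \<tau> z" by (simp add: fun_eq_iff)
  then show ?thesis unfolding w_def .
qed

end

lemma additive_smul:
  assumes add: "\<And>a b. a \<in> Mset \<Longrightarrow> b \<in> Mset \<Longrightarrow> G (a + b) = G a + G b"
    and v: "v \<in> Mset"
  shows "G (smul p v) = smul p (G v)"
proof -
  have G0: "G 0 = 0"
  proof -
    have "G (0 + 0) = G 0 + G 0" by (rule add) simp_all
    then have "G 0 = G 0 + G 0" by (simp only: add.right_neutral)
    then show ?thesis by (metis add_cancel_right_right)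
  qed
  have nat: "G (smul (of_nat n) w) = smul (of_nat n) (G w)" if w: "w \<in> Mset" for n w
  proof (induction n)
    case 0
    have e1: "smul (of_nat 0) w = 0" by (simp add: fun_eq_iff)
    have e2: "smul (of_nat 0) (G w) = 0" by (simp add: fun_eq_iff)
    show ?case unfolding e1 e2 by (rule G0)
  next
    case (Suc n)
    have "smul (of_nat (Suc n)) w = smul (of_nat n) w + w" by (simp add: fun_eq_iff algebra_simps)
    then have "G (smul (of_nat (Suc n)) w) = G (smul (of_nat n) w) + G w" using add[OF Mset_smul[OF w] w] by simp
    note h = this
    have e: "smul (of_nat n) (G w) + G w = smul (of_nat (Suc n)) (G w)" by (simp add: fun_eq_iff algebra_simps)
    show ?case by (simp only: h Suc.IH e)
  qed
  have neg: "G (- a) = - G a" if "a \<in> Mset" for a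
  proof -
    have "G (a + - a) = G a + G (- a)" using add that by blast
    then have "G a + G (- a) = 0" using G0 by simp
    then show ?thesis by (simp add: add_eq_0_iff)
  qed
  have int: "G (smul (of_int z) w) = smul (of_int z) (G w)" if w: "w \<in> Mset" for z w
  proof (cases "z \<ge> 0")
    case True
    have e: "(of_int z :: rat) = of_nat (nat z)" using True by simp
    show ?thesis unfolding e by (rule nat[OF w])
  next
    case False
    have e: "(of_int z :: rat) = - of_nat (nat (-z))" using False by simp
    have "smul (of_int z) w = - smul (of_nat (nat (-z))) w" unfolding e by (simp add: fun_eq_iff)
    then have "G (smul (of_int z) w) = - G (smul (of_nat (nat (-z))) w)" using neg w by auto
    also have "\<dots> = smul (of_int z) (G w)" unfolding nat[OF w] e by (simp add: fun_eq_iff)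
    finally show ?thesis .
  qed
  obtain a b where ab: "quotient_of p = (a, b)" by (cases "quotient_of p")
  have b: "b > 0" using quotient_of_denom_pos[OF ab] .
  have p: "p = of_int a / of_int b" using quotient_of_div[OF ab] .
  have bp: "of_int b * p = of_int a" using p b by simp
  have "smul (of_int b) (G (smul p v)) = G (smul (of_int b) (smul p v))" using int[OF Mset_smul[OF v], of b] by simp
  also have "smul (of_int b) (smul p v) = smul (of_int a) v" using bp by (simp add: fun_eq_iff mult.assoc[symmetric])
  also have "G (smul (of_int a) v) = smul (of_int a) (G v)" using int[OF v] .
  finally have e: "smul (of_int b) (G (smul p v)) = smul (of_int a) (G v)" .
  have "G (smul p v) i = p * G v i" for i
  proof -
    have h: "of_int b * G (smul p v) i = of_int a * G v i" using fun_cong[OF e, of i] by simp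
    have "of_int b * (p * G v i) = of_int a * G v i" using bp by (metis mult.assoc)
    then have "of_int b * G (smul p v) i = of_int b * (p * G v i)" using h by linarith
    then show ?thesis using b by simp
  qed
  then show ?thesis by (simp add: fun_eq_iff)
qed

context S
begin

definition U where "U x \<longleftrightarrow> x \<in> Mset \<and> x \<noteq> 0 \<and> x \<noteq> \<iota> 0"

lemma fresh2: "v \<in> Mset \<Longrightarrow> w \<in> Mset \<Longrightarrow> \<exists>k. v k = 0 \<and> w k = 0"
proof -
  assume "v \<in> Mset" "w \<in> Mset"
  then have "finite ({i. v i \<noteq> 0} \<union> {i. w i \<noteq> 0})" using supp_fin by auto
  then obtain k where "k \<notin> {i. v i \<noteq> 0} \<union> {i. w i \<noteq> 0}" using fresh by blast
  then show ?thesis by auto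
qed

definition base :: "(nat \<Rightarrow> rat) \<Rightarrow> nat \<Rightarrow> rat" where "base v = dl (SOME k. v k = 0 \<and> \<iota> 0 k = 0)"
definition GG where "GG v = \<tau> (base v + v) - \<tau> (base v)"

lemma base: assumes "v \<in> Mset" shows "\<exists>k. base v = dl k \<and> v k = 0 \<and> \<iota> 0 k = 0"
proof -
  have "\<exists>k. v k = 0 \<and> \<iota> 0 k = 0" using fresh2[OF assms, of "\<iota> 0"] by simp
  then show ?thesis unfolding base_def by (metis (mono_tags, lifting) someI_ex)
qed

lemma U_fresh: assumes "v \<in> Mset" "v k = 0" "\<iota> 0 k = 0" shows "U (dl k + v)"
proof -
  have c: "(dl k + v) k = 1" using assms by simp
  have "dl k + v \<noteq> 0" using nzc[of "dl k + v" k] c by simp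
  moreover have "dl k + v \<noteq> \<iota> 0" using nec[of "dl k + v" k "\<iota> 0"] c assms(3) by simp
  ultimately show ?thesis unfolding U_def using assms(1) by auto
qed

lemma U_dl: assumes "\<iota> 0 k = 0" shows "U (dl k)"
  using U_fresh[of 0 k] assms by simp

lemma DIFF:
  assumes "U x" "U y"
  shows "\<tau> x - \<tau> y = GG (x - y)"
proof -
  have xM: "x \<in> Mset" "y \<in> Mset" using assms unfolding U_def by auto
  have vM: "x - y \<in> Mset" using xM by auto
  obtain k where k: "base (x - y) = dl k" "(x - y) k = 0" "\<iota> 0 k = 0" using base[OF vM] by blast
  have Ud: "U (dl k)" using U_dl[OF k(3)] .
  have Ud2: "U (dl k + (x - y))" using U_fresh[OF vM k(2,3)] .
  have "\<tau> (x - y + dl k) = \<tau> x - \<tau> y + \<tau> (dl k)"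
    by (rule LAW) (use assms Ud Ud2 in \<open>auto simp: U_def algebra_simps\<close>)
  moreover have "x - y + dl k = dl k + (x - y)" by (simp add: algebra_simps)
  ultimately show ?thesis unfolding GG_def k(1) by (simp add: algebra_simps)
qed

lemma GG_M: "v \<in> Mset \<Longrightarrow> GG v \<in> Mset"
proof -
  assume v: "v \<in> Mset"
  obtain k where k: "base v = dl k" using base[OF v] by blast
  show ?thesis unfolding GG_def k using v by auto
qed

lemma GG_add:
  assumes "a \<in> Mset" "b \<in> Mset"
  shows "GG (a + b) = GG a + GG b"
proof -
  have ab: "a + b \<in> Mset" using assms by auto
  obtain k where k: "a k = 0" "b k = 0" "\<iota> 0 k = 0"
  proof -
    have fin: "finite ({i. a i \<noteq> 0} \<union> {i. b i \<noteq> 0} \<union> {i. \<iota> 0 i \<noteq> 0})" using supp_fin assms by auto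
    obtain k where "k \<notin> {i. a i \<noteq> 0} \<union> {i. b i \<noteq> 0} \<union> {i. \<iota> 0 i \<noteq> 0}" using fresh[OF fin] by blast
    then show ?thesis using that by auto
  qed
  have U1: "U (dl k + (a + b))" by (rule U_fresh[OF ab]) (use k in auto)
  have U2: "U (dl k + b)" by (rule U_fresh[OF assms(2)]) (use k in auto)
  have U3: "U (dl k)" by (rule U_dl) (use k in auto)
  have "GG (a + b) = \<tau> (dl k + (a + b)) - \<tau> (dl k)" using DIFF[OF U1 U3] by simp
  also have "\<dots> = (\<tau> (dl k + (a + b)) - \<tau> (dl k + b)) + (\<tau> (dl k + b) - \<tau> (dl k))" by simp
  also have "\<dots> = GG a + GG b" using DIFF[OF U1 U2] DIFF[OF U2 U3] by (simp add: algebra_simps)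
  finally show ?thesis .
qed

lemma GG_smul: "v \<in> Mset \<Longrightarrow> GG (smul p v) = smul p (GG v)"
  by (rule additive_smul[OF GG_add])

lemma GG_zero: "GG 0 = 0" using GG_add[of 0 0] by simp

lemma GG_diff: assumes "a \<in> Mset" "b \<in> Mset" shows "GG (a - b) = GG a - GG b"
proof -
  have "GG (a - b + b) = GG (a - b) + GG b" by (rule GG_add) (use assms in auto)
  then have "GG a = GG (a - b) + GG b" by simp
  then show ?thesis by (simp add: algebra_simps)
qed

lemma GG_inj: assumes "v \<in> Mset" "GG v = 0" shows "v = 0"
proof -
  obtain k where k: "base v = dl k" using base[OF assms(1)] by blast
  have "\<tau> (dl k + v) = \<tau> (dl k)" using assms(2) unfolding GG_def k by simp
  then have "dl k + v = dl k" using tinj assms(1) by blast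
  then show ?thesis by simp
qed

lemma GG_surj: assumes t: "t \<in> Mset" shows "\<exists>v\<in>Mset. GG v = t"
proof -
  obtain m where m: "t m = 0" "\<tau> 0 m = 0" using fresh2[OF t tM[OF Mset_zero]] by blast
  define B where "B = dl m"
  define X where "X = t + B"
  have BM: "B \<in> Mset" "X \<in> Mset" unfolding B_def X_def using t by auto
  have Bc: "B m = 1" "X m = 1" unfolding B_def X_def using m by auto
  have ne: "B \<noteq> 0" "B \<noteq> \<tau> 0" "X \<noteq> 0" "X \<noteq> \<tau> 0" using Bc m by (auto simp: fun_eq_iff) (metis zero_neq_one)+
  have Ux: "U (\<iota> X)" unfolding U_def using BM ne by (metis Mset_zero iM t_i)
  have Ub: "U (\<iota> B)" unfolding U_def using BM ne by (metis Mset_zero iM t_i)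
  have "GG (\<iota> X - \<iota> B) = X - B" using DIFF[OF Ux Ub] BM by simp
  also have "\<dots> = t" unfolding X_def by simp
  finally show ?thesis using BM by (intro bexI[of _ "\<iota> X - \<iota> B"]) auto
qed

lemma affine_all: "\<exists>v0\<in>Mset. \<forall>x\<in>Mset. \<tau> x = GG x + v0"
proof -
  obtain k0 where k0: "\<iota> 0 k0 = 0" using fresh2[of "\<iota> 0" "\<iota> 0"] by auto
  define c where "c = dl k0"
  have Uc: "U c" unfolding c_def by (rule U_dl[OF k0])
  have cM: "c \<in> Mset" unfolding c_def by simp
  define v0 where "v0 = \<tau> c - GG c"
  have v0M: "v0 \<in> Mset" unfolding v0_def using cM GG_M by auto
  have onU: "\<tau> x = GG x + v0" if "U x" for x
  proof -
    have xM: "x \<in> Mset" using that U_def by auto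
    have "\<tau> x - \<tau> c = GG x - GG c" using DIFF[OF that Uc] GG_diff xM cM by simp
    then show ?thesis unfolding v0_def by (simp add: algebra_simps)
  qed
  define oo where "oo = \<iota> 0"
  have oM: "oo \<in> Mset" unfolding oo_def by simp
  have ono: "\<tau> oo = GG oo + v0" if onz: "oo \<noteq> 0"
  proof -
    obtain m where m: "oo m = 0" using fresh2[OF oM oM] by auto
    define p1 where "p1 = oo + dl m"
    define p2 where "p2 = oo + smul 2 (dl m)"
    have p1c: "p1 m = 1" "p2 m = 2" unfolding p1_def p2_def using m by auto
    have pM: "p1 \<in> Mset" "p2 \<in> Mset" unfolding p1_def p2_def using oM by auto
    have "p1 \<noteq> 0" "p2 \<noteq> 0" using nzc[of p1 m] nzc[of p2 m] p1c by auto
    moreover have "p1 \<noteq> oo" "p2 \<noteq> oo" using nec[of p1 m oo] nec[of p2 m oo] p1c m by auto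
    ultimately have Up: "U p1" "U p2" unfolding U_def oo_def[symmetric] using pM by auto
    have ind: "lin_indep2 oo p1" by (rule ic[of _ m]) (use m p1c onz in auto)
    have l2: "p2 \<in> lin oo p1" unfolding lin_def p1_def p2_def by (auto simp: fun_eq_iff intro!: exI[of _ 2])
    have "p1 \<noteq> p2" using p1c by auto
    then have "\<tau> oo \<in> lin (\<tau> p1) (\<tau> p2)" using PA[OF oM pM(1) ind lin_right l2 lin_left] by blast
    then obtain t where t: "\<tau> oo = \<tau> p1 + smul t (\<tau> p2 - \<tau> p1)" by (auto simp: lin_def)
    define q where "q = oo + smul (1 + t) (dl m)"
    have qM: "q \<in> Mset" unfolding q_def using oM by auto
    have "\<tau> oo = GG p1 + v0 + smul t (GG p2 - GG p1)" using t onU Up by simp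
    also have "\<dots> = GG (p1 + smul t (p2 - p1)) + v0"
      using GG_add GG_smul GG_diff pM by (simp add: Mset_diff Mset_smul)
    also have "p1 + smul t (p2 - p1) = q" unfolding p1_def p2_def q_def by (simp add: fun_eq_iff algebra_simps)
    finally have tq: "\<tau> oo = GG q + v0" .
    show ?thesis
    proof (cases "1 + t = 0")
      case True then have "q = oo" unfolding q_def by simp
      then show ?thesis using tq by simp
    next
      case False
      have "q m = 1 + t" unfolding q_def using m by simp
      then have "q \<noteq> 0" "q \<noteq> oo" using nzc[of q m] nec[of q m oo] False m by auto
      then have Uq: "U q" unfolding U_def oo_def[symmetric] using qM by auto
      then have "\<tau> q = \<tau> oo" using onU tq by simp
      then have "q = oo" using tinj qM oM by blast
      then have "q m = oo m" by simp
      then show ?thesis using \<open>q m = 1 + t\<close> m False by simp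
    qed
  qed
  have on0: "\<tau> 0 = GG 0 + v0"
  proof -
    define y where "y = \<iota> v0"
    have yM: "y \<in> Mset" and ty: "\<tau> y = v0" unfolding y_def using v0M by auto
    have "y = 0"
    proof (rule ccontr)
      assume y0: "y \<noteq> 0"
      have "\<tau> y = GG y + v0"
      proof (cases "y = oo")
        case True then show ?thesis using ono y0 by simp
      next
        case False then have "U y" unfolding U_def oo_def[symmetric] using yM y0 by simp
        then show ?thesis using onU by simp
      qed
      then have "GG y = 0" using ty by simp
      then show False using GG_inj yM y0 by simp
    qed
    then show ?thesis using ty GG_zero by simp
  qed
  have "\<tau> x = GG x + v0" if "x \<in> Mset" for x
  proof (cases "x = 0")
    case True then show ?thesis using on0 by simp
  next
    case False
    show ?thesis
    proof (cases "x = oo")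
      case True then show ?thesis using ono False by simp
    next
      case False': False
      then have "U x" unfolding U_def oo_def[symmetric] using that False by simp
      then show ?thesis using onU by simp
    qed
  qed
  then show ?thesis using v0M by blast
qed

lemma main: "in_AGL \<tau>"
proof -
  obtain v0 where v0: "v0 \<in> Mset" "\<forall>x\<in>Mset. \<tau> x = GG x + v0" using affine_all by blast
  have lin: "linear_on_M GG" unfolding linear_on_M_def using GG_add GG_smul by simp
  have inj: "inj_on GG Mset"
  proof (rule inj_onI)
    fix a b assume ab: "a \<in> Mset" "b \<in> Mset" "GG a = GG b"
    then have "GG (a - b) = 0" using GG_diff by simp
    then have "a - b = 0" using GG_inj ab Mset_diff by blast
    then show "a = b" by simp
  qed
  have im: "GG ` Mset = Mset" using GG_M GG_surj by blast
  have "bij_betw GG Mset Mset" unfolding bij_betw_def using inj im by simp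
  then show ?thesis unfolding in_AGL_def using lin v0 by auto
qed

end

theorem lemma1:
  fixes R :: "(nat \<Rightarrow> rat) \<Rightarrow> (nat \<Rightarrow> rat) \<Rightarrow> (nat \<Rightarrow> rat) \<Rightarrow> bool"
    and \<sigma> :: "(nat \<Rightarrow> rat) \<Rightarrow> (nat \<Rightarrow> rat)"
  assumes "affine_rel R"
    and "bij_betw \<sigma> Mset Mset"
    and "preserves3 \<sigma> R"
  shows "in_AGL \<sigma>"
proof -
  interpret S R \<sigma> by (rule S.intro) (use assms in auto)
  show ?thesis by (rule main)
qed

end
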